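(* Let $A$ be a semiprime ring which does not contain an infinite direct sum of nonzero two-sided ideals. Let $Y$ be a non-singular right $A$-module which is automorphism-invariant and square-free, such that $\operatorname{Hom}_A(D_1,D_2)=0$ for any two submodules $D_1,D_2$ of $Y$ with $D_1\cap D_2=0$, and such that for every set $\{K_i\mid i\in I\}$ of closed submodules of $Y$ the submodule $\sum_{i\in I}K_i$ is automorphism-invariant. Then either $Y=0$ or $Y$ contains a nonzero quasi-injective uniform submodule.
   Context: All modules are unitary right modules. A module $M$ is automorphism-invariant if $M$ is invariant under every automorphism of its injective hull. A module $X$ is quasi-injective if for every submodule $X_1\subseteq X$ every homomorphism $X_1\to X$ extends to an endomorphism of $X$. A module is square-free if it contains no direct sum of two nonzero isomorphic submodules; uniform if any two nonzero submodules intersect nontrivially. A submodule $Y$ of $X$ is closed if it has no proper essential extension inside $X$. Non-singular: no nonzero element has essential right annihilator in $A$. A ring is semiprime if it has no nonzero nilpotent ideals. *)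

theory Defs
  imports "HOL-Algebra.Ring" "HOL-Algebra.Ideal" "HOL-Algebra.Ideal_Product"
begin

record ('m, 'r) rmodule =
  mcarrier :: "'m set"
  madd :: "'m \<Rightarrow> 'm \<Rightarrow> 'm"
  mzero :: 'm
  mact :: "'m \<Rightarrow> 'r \<Rightarrow> 'm"

definition rmodule :: "('r, 'b) ring_scheme \<Rightarrow> ('m, 'r) rmodule \<Rightarrow> bool" where
  "rmodule A M \<longleftrightarrow> ring A \<and>
     mzero M \<in> mcarrier M \<and>
     (\<forall>x\<in>mcarrier M. \<forall>y\<in>mcarrier M. madd M x y \<in> mcarrier M) \<and>
     (\<forall>x\<in>mcarrier M. \<forall>a\<in>carrier A. mact M x a \<in> mcarrier M) \<and>
     (\<forall>x\<in>mcarrier M. \<forall>y\<in>mcarrier M. \<forall>z\<in>mcarrier M.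
        madd M (madd M x y) z = madd M x (madd M y z)) \<and>
     (\<forall>x\<in>mcarrier M. \<forall>y\<in>mcarrier M. madd M x y = madd M y x) \<and>
     (\<forall>x\<in>mcarrier M. madd M (mzero M) x = x) \<and>
     (\<forall>x\<in>mcarrier M. \<exists>y\<in>mcarrier M. madd M x y = mzero M) \<and>
     (\<forall>x\<in>mcarrier M. \<forall>y\<in>mcarrier M. \<forall>a\<in>carrier A.
        mact M (madd M x y) a = madd M (mact M x a) (mact M y a)) \<and>
     (\<forall>x\<in>mcarrier M. \<forall>a\<in>carrier A. \<forall>b\<in>carrier A.
        mact M x (a \<oplus>\<^bsub>A\<^esub> b) = madd M (mact M x a) (mact M x b)) \<and>
     (\<forall>x\<in>mcarrier M. \<forall>a\<in>carrier A. \<forall>b\<in>carrier A.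
        mact M x (a \<otimes>\<^bsub>A\<^esub> b) = mact M (mact M x a) b) \<and>
     (\<forall>x\<in>mcarrier M. mact M x \<one>\<^bsub>A\<^esub> = x)"

definition regular_rmodule :: "('r, 'b) ring_scheme \<Rightarrow> ('r, 'r) rmodule" where
  "regular_rmodule A = \<lparr> mcarrier = carrier A, madd = add A, mzero = zero A, mact = mult A \<rparr>"

definition submodule :: "('r, 'b) ring_scheme \<Rightarrow> ('m, 'r) rmodule \<Rightarrow> 'm set \<Rightarrow> bool" where
  "submodule A M N \<longleftrightarrow> N \<subseteq> mcarrier M \<and> mzero M \<in> N \<and>
     (\<forall>x\<in>N. \<forall>y\<in>N. madd M x y \<in> N) \<and>
     (\<forall>x\<in>N. \<forall>a\<in>carrier A. mact M x a \<in> N)"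

definition right_ideal :: "('r, 'b) ring_scheme \<Rightarrow> 'r set \<Rightarrow> bool" where
  "right_ideal A I \<longleftrightarrow> submodule A (regular_rmodule A) I"

definition rhom :: "('r, 'b) ring_scheme \<Rightarrow> ('m, 'r) rmodule \<Rightarrow> 'm set
    \<Rightarrow> ('n, 'r) rmodule \<Rightarrow> 'n set \<Rightarrow> ('m \<Rightarrow> 'n) \<Rightarrow> bool" where
  "rhom A M S N T f \<longleftrightarrow> f \<in> S \<rightarrow> T \<and>
     (\<forall>x\<in>S. \<forall>y\<in>S. f (madd M x y) = madd N (f x) (f y)) \<and>
     (\<forall>x\<in>S. \<forall>a\<in>carrier A. f (mact M x a) = mact N (f x) a)"

definition essential_in :: "('r, 'b) ring_scheme \<Rightarrow> ('m, 'r) rmodule \<Rightarrow> 'm set \<Rightarrow> 'm set \<Rightarrow> bool" where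
  "essential_in A M S T \<longleftrightarrow> submodule A M S \<and> submodule A M T \<and> S \<subseteq> T \<and>
     (\<forall>W. submodule A M W \<and> W \<subseteq> T \<and> W \<noteq> {mzero M} \<longrightarrow> W \<inter> S \<noteq> {mzero M})"

definition closed_in :: "('r, 'b) ring_scheme \<Rightarrow> ('m, 'r) rmodule \<Rightarrow> 'm set \<Rightarrow> 'm set \<Rightarrow> bool" where
  "closed_in A M S T \<longleftrightarrow> submodule A M S \<and> submodule A M T \<and> S \<subseteq> T \<and>
     (\<forall>Z. submodule A M Z \<and> Z \<subseteq> T \<and> essential_in A M S Z \<longrightarrow> Z = S)"

definition submodule_sum :: "('r, 'b) ring_scheme \<Rightarrow> ('m, 'r) rmodule \<Rightarrow> 'm set set \<Rightarrow> 'm set" where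
  "submodule_sum A M \<K> = \<Inter> {N. submodule A M N \<and> \<Union>\<K> \<subseteq> N}"

definition baer_injective :: "('r, 'b) ring_scheme \<Rightarrow> ('e, 'r) rmodule \<Rightarrow> bool" where
  "baer_injective A E \<longleftrightarrow>
     (\<forall>I f. right_ideal A I \<and> rhom A (regular_rmodule A) I E (mcarrier E) f \<longrightarrow>
        (\<exists>e\<in>mcarrier E. \<forall>a\<in>I. f a = mact E e a))"

definition injective_hull :: "('r, 'b) ring_scheme \<Rightarrow> ('m, 'r) rmodule \<Rightarrow> 'm set
    \<Rightarrow> ('e, 'r) rmodule \<Rightarrow> ('m \<Rightarrow> 'e) \<Rightarrow> bool" where
  "injective_hull A M S E \<iota> \<longleftrightarrow> rmodule A E \<and> baer_injective A E \<and>
     rhom A M S E (mcarrier E) \<iota> \<and> inj_on \<iota> S \<and>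
     essential_in A E (\<iota> ` S) (mcarrier E)"

definition rautomorphism :: "('r, 'b) ring_scheme \<Rightarrow> ('e, 'r) rmodule \<Rightarrow> ('e \<Rightarrow> 'e) \<Rightarrow> bool" where
  "rautomorphism A E \<sigma> \<longleftrightarrow> rhom A E (mcarrier E) E (mcarrier E) \<sigma> \<and>
     bij_betw \<sigma> (mcarrier E) (mcarrier E)"

text \<open>The submodule S of M is automorphism-invariant, with injective hulls taken in the
  type 'e: an injective hull exists in 'e, and S is invariant under every automorphism of
  every injective hull in 'e (all injective hulls are isomorphic over S).\<close>
definition aut_invariant :: "'e itself \<Rightarrow> ('r, 'b) ring_scheme \<Rightarrow> ('m, 'r) rmodule \<Rightarrow> 'm set \<Rightarrow> bool" where
  "aut_invariant _ A M S \<longleftrightarrow>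
     (\<exists>(E :: ('e, 'r) rmodule) \<iota>. injective_hull A M S E \<iota>) \<and>
     (\<forall>(E :: ('e, 'r) rmodule) \<iota> \<sigma>. injective_hull A M S E \<iota> \<and> rautomorphism A E \<sigma>
        \<longrightarrow> \<sigma> ` (\<iota> ` S) \<subseteq> \<iota> ` S)"

definition quasi_injective :: "('r, 'b) ring_scheme \<Rightarrow> ('m, 'r) rmodule \<Rightarrow> 'm set \<Rightarrow> bool" where
  "quasi_injective A M X \<longleftrightarrow>
     (\<forall>X1 f. submodule A M X1 \<and> X1 \<subseteq> X \<and> rhom A M X1 M X f \<longrightarrow>
        (\<exists>g. rhom A M X M X g \<and> (\<forall>x\<in>X1. g x = f x)))"

definition square_free :: "('r, 'b) ring_scheme \<Rightarrow> ('m, 'r) rmodule \<Rightarrow> 'm set \<Rightarrow> bool" where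
  "square_free A M X \<longleftrightarrow>
     \<not> (\<exists>N1 N2 f. submodule A M N1 \<and> submodule A M N2 \<and> N1 \<subseteq> X \<and> N2 \<subseteq> X \<and>
          N1 \<inter> N2 = {mzero M} \<and> N1 \<noteq> {mzero M} \<and> N2 \<noteq> {mzero M} \<and>
          rhom A M N1 M N2 f \<and> bij_betw f N1 N2)"

definition uniform :: "('r, 'b) ring_scheme \<Rightarrow> ('m, 'r) rmodule \<Rightarrow> 'm set \<Rightarrow> bool" where
  "uniform A M X \<longleftrightarrow> X \<noteq> {mzero M} \<and>
     (\<forall>U V. submodule A M U \<and> submodule A M V \<and> U \<subseteq> X \<and> V \<subseteq> X \<and>
        U \<noteq> {mzero M} \<and> V \<noteq> {mzero M} \<longrightarrow> U \<inter> V \<noteq> {mzero M})"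

definition nonsingular :: "('r, 'b) ring_scheme \<Rightarrow> ('m, 'r) rmodule \<Rightarrow> bool" where
  "nonsingular A M \<longleftrightarrow>
     (\<forall>x\<in>mcarrier M. x \<noteq> mzero M \<longrightarrow>
        \<not> essential_in A (regular_rmodule A) {a \<in> carrier A. mact M x a = mzero M} (carrier A))"

text \<open>Powers of a two-sided ideal: ideal_pow A I n = I^(n+1).\<close>
definition ideal_pow :: "('r, 'b) ring_scheme \<Rightarrow> 'r set \<Rightarrow> nat \<Rightarrow> 'r set" where
  "ideal_pow A I n = ((\<lambda>J. ideal_prod A J I) ^^ n) I"

definition semiprime :: "('r, 'b) ring_scheme \<Rightarrow> bool" where
  "semiprime A \<longleftrightarrow> ring A \<and>
     (\<forall>I. ideal I A \<and> (\<exists>n. ideal_pow A I n = {\<zero>\<^bsub>A\<^esub>}) \<longrightarrow> I = {\<zero>\<^bsub>A\<^esub>})"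

definition independent_ideals :: "('r, 'b) ring_scheme \<Rightarrow> 'r set set \<Rightarrow> bool" where
  "independent_ideals A \<S> \<longleftrightarrow>
     (\<forall>F g. finite F \<and> F \<subseteq> \<S> \<and> (\<forall>J\<in>F. g J \<in> J) \<and> finsum A g F = \<zero>\<^bsub>A\<^esub>
        \<longrightarrow> (\<forall>J\<in>F. g J = \<zero>\<^bsub>A\<^esub>))"

definition no_infinite_direct_sum_of_ideals :: "('r, 'b) ring_scheme \<Rightarrow> bool" where
  "no_infinite_direct_sum_of_ideals A \<longleftrightarrow>
     \<not> (\<exists>\<S>. infinite \<S> \<and> (\<forall>J\<in>\<S>. ideal J A \<and> J \<noteq> {\<zero>\<^bsub>A\<^esub>}) \<and> independent_ideals A \<S>)"

end

theory Submission
  imports Defs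
begin

locale rmod =
  fixes A :: "('r, 'b) ring_scheme" and M :: "('m, 'r) rmodule"
  assumes rm: "rmodule A M"
begin

lemma ringA: "ring A" using rm unfolding rmodule_def by simp

lemma zero_closed[simp]: "mzero M \<in> mcarrier M" using rm unfolding rmodule_def by simp
lemma add_closed[simp]: "x \<in> mcarrier M \<Longrightarrow> y \<in> mcarrier M \<Longrightarrow> madd M x y \<in> mcarrier M"
  using rm unfolding rmodule_def by (elim conjE) blast
lemma act_closed[simp]: "x \<in> mcarrier M \<Longrightarrow> a \<in> carrier A \<Longrightarrow> mact M x a \<in> mcarrier M"
  using rm unfolding rmodule_def by (elim conjE) blast
lemma assoc: "x \<in> mcarrier M \<Longrightarrow> y \<in> mcarrier M \<Longrightarrow> z \<in> mcarrier M \<Longrightarrow>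
   madd M (madd M x y) z = madd M x (madd M y z)"
  using rm unfolding rmodule_def by (elim conjE) blast
lemma comm: "x \<in> mcarrier M \<Longrightarrow> y \<in> mcarrier M \<Longrightarrow> madd M x y = madd M y x"
  using rm unfolding rmodule_def by (elim conjE) blast
lemma lzero[simp]: "x \<in> mcarrier M \<Longrightarrow> madd M (mzero M) x = x"
  using rm unfolding rmodule_def by (elim conjE) blast
lemma rzero[simp]: "x \<in> mcarrier M \<Longrightarrow> madd M x (mzero M) = x"
  using comm lzero by simp
lemma ex_neg: "x \<in> mcarrier M \<Longrightarrow> \<exists>y\<in>mcarrier M. madd M x y = mzero M"
  using rm unfolding rmodule_def by (elim conjE) blast
lemma act_distr1: "x \<in> mcarrier M \<Longrightarrow> y \<in> mcarrier M \<Longrightarrow> a \<in> carrier A \<Longrightarrow>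
   mact M (madd M x y) a = madd M (mact M x a) (mact M y a)"
  using rm unfolding rmodule_def by (elim conjE) blast
lemma act_distr2: "x \<in> mcarrier M \<Longrightarrow> a \<in> carrier A \<Longrightarrow> b \<in> carrier A \<Longrightarrow>
   mact M x (a \<oplus>\<^bsub>A\<^esub> b) = madd M (mact M x a) (mact M x b)"
  using rm unfolding rmodule_def by (elim conjE) blast
lemma act_mult: "x \<in> mcarrier M \<Longrightarrow> a \<in> carrier A \<Longrightarrow> b \<in> carrier A \<Longrightarrow>
   mact M x (a \<otimes>\<^bsub>A\<^esub> b) = mact M (mact M x a) b"
  using rm unfolding rmodule_def by (elim conjE) blast
lemma act_one[simp]: "x \<in> mcarrier M \<Longrightarrow> mact M x \<one>\<^bsub>A\<^esub> = x"
  using rm unfolding rmodule_def by (elim conjE) auto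

lemma lcomm: "x \<in> mcarrier M \<Longrightarrow> y \<in> mcarrier M \<Longrightarrow> z \<in> mcarrier M \<Longrightarrow>
   madd M x (madd M y z) = madd M y (madd M x z)"
proof -
  assume a: "x \<in> mcarrier M" "y \<in> mcarrier M" "z \<in> mcarrier M"
  have "madd M x (madd M y z) = madd M (madd M x y) z" using assoc[OF a] by simp
  also have "\<dots> = madd M (madd M y x) z" using comm[of x y] a by simp
  also have "\<dots> = madd M y (madd M x z)" using assoc[of y x z] a by simp
  finally show ?thesis .
qed

lemma cancel:
  assumes "x \<in> mcarrier M" "y \<in> mcarrier M" "z \<in> mcarrier M" "madd M x y = madd M x z"
  shows "y = z"
proof -
  obtain w where w: "w \<in> mcarrier M" "madd M x w = mzero M" using ex_neg assms(1) by blast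
  have "madd M w (madd M x y) = madd M w (madd M x z)" using assms by simp
  moreover have "madd M w (madd M x y) = y" if "y \<in> mcarrier M" for y
  proof -
    have "madd M w (madd M x y) = madd M (madd M w x) y" using assoc[of w x y] w assms that by simp
    also have "\<dots> = madd M (madd M x w) y" using comm[of w x] w assms by simp
    finally show ?thesis using w that by simp
  qed
  ultimately show ?thesis using assms by metis
qed

lemma idem_zero: "x \<in> mcarrier M \<Longrightarrow> madd M x x = x \<Longrightarrow> x = mzero M"
  using cancel[of x x "mzero M"] by simp

lemma act_zero[simp]: "x \<in> mcarrier M \<Longrightarrow> mact M x \<zero>\<^bsub>A\<^esub> = mzero M"
proof -
  assume x: "x \<in> mcarrier M"
  interpret ring A by (rule ringA)
  have "mact M x (\<zero>\<^bsub>A\<^esub> \<oplus>\<^bsub>A\<^esub> \<zero>\<^bsub>A\<^esub>) = mact M x \<zero>\<^bsub>A\<^esub>" by simp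
  then have "madd M (mact M x \<zero>\<^bsub>A\<^esub>) (mact M x \<zero>\<^bsub>A\<^esub>) = mact M x \<zero>\<^bsub>A\<^esub>"
    using x act_distr2[of x "\<zero>\<^bsub>A\<^esub>" "\<zero>\<^bsub>A\<^esub>"] by simp
  then show ?thesis using idem_zero[of "mact M x \<zero>\<^bsub>A\<^esub>"] x by simp
qed

lemma zero_act[simp]: "a \<in> carrier A \<Longrightarrow> mact M (mzero M) a = mzero M"
proof -
  assume a: "a \<in> carrier A"
  have "madd M (mact M (mzero M) a) (mact M (mzero M) a) = mact M (mzero M) a"
    using act_distr1[of "mzero M" "mzero M" a] a by simp
  then show ?thesis using idem_zero[of "mact M (mzero M) a"] a by simp
qed

definition neg :: "'m \<Rightarrow> 'm" where "neg x = mact M x (\<ominus>\<^bsub>A\<^esub> \<one>\<^bsub>A\<^esub>)"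

lemma minus_one_closed[simp]: "\<ominus>\<^bsub>A\<^esub> \<one>\<^bsub>A\<^esub> \<in> carrier A"
proof -
  interpret ring A by (rule ringA)
  show ?thesis by simp
qed

lemma neg_closed[simp]: "x \<in> mcarrier M \<Longrightarrow> neg x \<in> mcarrier M"
  unfolding neg_def by simp

lemma neg_r[simp]: "x \<in> mcarrier M \<Longrightarrow> madd M x (neg x) = mzero M"
proof -
  assume x: "x \<in> mcarrier M"
  interpret ring A by (rule ringA)
  have "madd M x (neg x) = mact M x (\<one>\<^bsub>A\<^esub> \<oplus>\<^bsub>A\<^esub> \<ominus>\<^bsub>A\<^esub> \<one>\<^bsub>A\<^esub>)"
    unfolding neg_def using x act_distr2 by simp
  also have "\<dots> = mzero M" using x by (simp add: r_neg)
  finally show ?thesis .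
qed

lemma neg_l[simp]: "x \<in> mcarrier M \<Longrightarrow> madd M (neg x) x = mzero M"
  using comm[of x "neg x"] by simp

lemma diff_zero_iff: "x \<in> mcarrier M \<Longrightarrow> y \<in> mcarrier M \<Longrightarrow> madd M x (neg y) = mzero M \<longleftrightarrow> x = y"
proof
  assume a: "x \<in> mcarrier M" "y \<in> mcarrier M" "madd M x (neg y) = mzero M"
  then have "madd M (neg y) x = madd M (neg y) y" using comm[of x "neg y"] by simp
  then show "x = y" using cancel[of "neg y" x y] a by simp
next
  assume "x \<in> mcarrier M" "y \<in> mcarrier M" "x = y"
  then show "madd M x (neg y) = mzero M" by simp
qed

lemma neg_act: "x \<in> mcarrier M \<Longrightarrow> a \<in> carrier A \<Longrightarrow> mact M (neg x) a = neg (mact M x a)"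
proof -
  assume x: "x \<in> mcarrier M" and a: "a \<in> carrier A"
  interpret ring A by (rule ringA)
  have "mact M (neg x) a = mact M x ((\<ominus>\<^bsub>A\<^esub> \<one>\<^bsub>A\<^esub>) \<otimes>\<^bsub>A\<^esub> a)" unfolding neg_def using x a act_mult by simp
  also have "\<dots> = mact M x (a \<otimes>\<^bsub>A\<^esub> (\<ominus>\<^bsub>A\<^esub> \<one>\<^bsub>A\<^esub>))"
  proof -
    have "(\<ominus>\<^bsub>A\<^esub> \<one>\<^bsub>A\<^esub>) \<otimes>\<^bsub>A\<^esub> a = \<ominus>\<^bsub>A\<^esub> a" using a l_minus[of "\<one>\<^bsub>A\<^esub>" a] by simp
    moreover have "a \<otimes>\<^bsub>A\<^esub> (\<ominus>\<^bsub>A\<^esub> \<one>\<^bsub>A\<^esub>) = \<ominus>\<^bsub>A\<^esub> a" using a r_minus[of a "\<one>\<^bsub>A\<^esub>"] by simp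
    ultimately show ?thesis by simp
  qed
  also have "\<dots> = neg (mact M x a)" unfolding neg_def using x a act_mult by simp
  finally show ?thesis .
qed

lemma neg_add: "x \<in> mcarrier M \<Longrightarrow> y \<in> mcarrier M \<Longrightarrow> neg (madd M x y) = madd M (neg x) (neg y)"
  unfolding neg_def using act_distr1 by simp

lemma act_minus: "x \<in> mcarrier M \<Longrightarrow> a \<in> carrier A \<Longrightarrow> mact M x (\<ominus>\<^bsub>A\<^esub> a) = neg (mact M x a)"
proof -
  assume x: "x \<in> mcarrier M" and a: "a \<in> carrier A"
  interpret ring A by (rule ringA)
  have "mact M x (\<ominus>\<^bsub>A\<^esub> a) = mact M x (a \<otimes>\<^bsub>A\<^esub> (\<ominus>\<^bsub>A\<^esub> \<one>\<^bsub>A\<^esub>))" using a r_minus[of a "\<one>\<^bsub>A\<^esub>"] by simp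
  then show ?thesis unfolding neg_def using x a act_mult by simp
qed

lemma neg_zero[simp]: "neg (mzero M) = mzero M"
  unfolding neg_def by simp

lemma neg_neg[simp]: "x \<in> mcarrier M \<Longrightarrow> neg (neg x) = x"
  using cancel[of "neg x" "neg (neg x)" x] by simp


lemma add_ac_simps:
  "x \<in> mcarrier M \<Longrightarrow> y \<in> mcarrier M \<Longrightarrow> z \<in> mcarrier M \<Longrightarrow>
   madd M (madd M x y) z = madd M x (madd M y z)"
  "x \<in> mcarrier M \<Longrightarrow> y \<in> mcarrier M \<Longrightarrow> madd M x y = madd M y x"
  "x \<in> mcarrier M \<Longrightarrow> y \<in> mcarrier M \<Longrightarrow> z \<in> mcarrier M \<Longrightarrow>
   madd M x (madd M y z) = madd M y (madd M x z)"
  using assoc comm lcomm by auto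

lemma neg_cancel_r[simp]: "x \<in> mcarrier M \<Longrightarrow> y \<in> mcarrier M \<Longrightarrow> madd M x (madd M (neg x) y) = y"
  using assoc[of x "neg x" y] by simp

lemma neg_cancel_l[simp]: "x \<in> mcarrier M \<Longrightarrow> y \<in> mcarrier M \<Longrightarrow> madd M (neg x) (madd M x y) = y"
  using assoc[of "neg x" x y] by simp

lemma swap_eq:
  assumes c: "p \<in> mcarrier M" "q \<in> mcarrier M" "r \<in> mcarrier M" "s \<in> mcarrier M"
    and e: "madd M p q = madd M r s"
  shows "madd M q (neg s) = madd M r (neg p)"
proof -
  have "madd M (madd M p s) (madd M q (neg s)) = madd M p q"
  proof -
    have "madd M (madd M p s) (madd M q (neg s)) = madd M p (madd M s (madd M q (neg s)))"
      using c by (simp add: assoc)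
    also have "madd M s (madd M q (neg s)) = q" using c lcomm[of s q "neg s"] by simp
    finally show ?thesis by simp
  qed
  moreover have "madd M (madd M p s) (madd M r (neg p)) = madd M r s"
  proof -
    have "madd M (madd M p s) (madd M r (neg p)) = madd M (madd M s p) (madd M r (neg p))"
      using c comm[of p s] by simp
    also have "\<dots> = madd M s (madd M p (madd M r (neg p)))" using c by (simp add: assoc)
    also have "madd M p (madd M r (neg p)) = r" using c lcomm[of p r "neg p"] by simp
    finally show ?thesis using c comm[of s r] by simp
  qed
  ultimately show ?thesis using e c cancel[of "madd M p s"] by simp
qed

lemma sub_carrier: "submodule A M N \<Longrightarrow> N \<subseteq> mcarrier M"
  unfolding submodule_def by blast
lemma sub_zero: "submodule A M N \<Longrightarrow> mzero M \<in> N"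
  unfolding submodule_def by blast
lemma sub_add: "submodule A M N \<Longrightarrow> x \<in> N \<Longrightarrow> y \<in> N \<Longrightarrow> madd M x y \<in> N"
  unfolding submodule_def by blast
lemma sub_act: "submodule A M N \<Longrightarrow> x \<in> N \<Longrightarrow> a \<in> carrier A \<Longrightarrow> mact M x a \<in> N"
  unfolding submodule_def by blast
lemma sub_neg: "submodule A M N \<Longrightarrow> x \<in> N \<Longrightarrow> neg x \<in> N"
  unfolding neg_def using sub_act by simp

lemma sub_full: "submodule A M (mcarrier M)"
  unfolding submodule_def by simp
lemma sub_triv: "submodule A M {mzero M}"
  unfolding submodule_def by simp
lemma sub_inter: "submodule A M N1 \<Longrightarrow> submodule A M N2 \<Longrightarrow> submodule A M (N1 \<inter> N2)"
  unfolding submodule_def by blast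

definition cyc :: "'m \<Rightarrow> 'm set" where "cyc x = {mact M x a | a. a \<in> carrier A}"

lemma cyc_sub: "x \<in> mcarrier M \<Longrightarrow> submodule A M (cyc x)"
proof -
  assume x: "x \<in> mcarrier M"
  interpret ring A by (rule ringA)
  show ?thesis unfolding submodule_def cyc_def
  proof (intro conjI ballI)
    show "{mact M x a |a. a \<in> carrier A} \<subseteq> mcarrier M" using x by auto
    show "mzero M \<in> {mact M x a |a. a \<in> carrier A}" using x act_zero by (metis (mono_tags, lifting) mem_Collect_eq zero_closed)
  next
    fix u v assume "u \<in> {mact M x a |a. a \<in> carrier A}" "v \<in> {mact M x a |a. a \<in> carrier A}"
    then obtain a b where "a \<in> carrier A" "b \<in> carrier A" "u = mact M x a" "v = mact M x b" by blast
    then show "madd M u v \<in> {mact M x a |a. a \<in> carrier A}"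
      using x act_distr2[of x a b] by (metis (mono_tags, lifting) add.m_closed mem_Collect_eq)
  next
    fix u c assume "u \<in> {mact M x a |a. a \<in> carrier A}" "c \<in> carrier A"
    then obtain a where "a \<in> carrier A" "u = mact M x a" by blast
    then show "mact M u c \<in> {mact M x a |a. a \<in> carrier A}"
      using x act_mult[of x a c] \<open>c \<in> carrier A\<close> by (metis (mono_tags, lifting) m_closed mem_Collect_eq)
  qed
qed

lemma cyc_self: "x \<in> mcarrier M \<Longrightarrow> x \<in> cyc x"
  unfolding cyc_def using ringA act_one by (metis (mono_tags, lifting) mem_Collect_eq ring.ring_simprules(6))

lemma cyc_min: "submodule A M N \<Longrightarrow> x \<in> N \<Longrightarrow> cyc x \<subseteq> N"
  unfolding cyc_def using sub_act by blast

lemma nonzero_elem: "N \<noteq> {mzero M} \<Longrightarrow> submodule A M N \<Longrightarrow> \<exists>x\<in>N. x \<noteq> mzero M"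
  using sub_zero by blast

end

lemma hom_zero:
  assumes "rmodule A M" "rmodule A N" "submodule A M S" "T \<subseteq> mcarrier N" "rhom A M S N T f"
  shows "f (mzero M) = mzero N"
proof -
  interpret M: rmod A M by (rule rmod.intro, fact)
  interpret N: rmod A N by (rule rmod.intro, fact)
  have z: "mzero M \<in> S" using M.sub_zero assms(3) .
  have f: "f (mzero M) \<in> mcarrier N" using assms z unfolding rhom_def by blast
  have "f (madd M (mzero M) (mzero M)) = madd N (f (mzero M)) (f (mzero M))"
    using assms z unfolding rhom_def by blast
  then have "madd N (f (mzero M)) (f (mzero M)) = f (mzero M)" by simp
  then show ?thesis using N.idem_zero f by blast
qed

lemma hom_neg:
  assumes "rmodule A M" "rmodule A N" "x \<in> S" "rhom A M S N T f"
  shows "f (rmod.neg A M x) = rmod.neg A N (f x)"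
proof -
  interpret M: rmod A M by (rule rmod.intro, fact)
  interpret N: rmod A N by (rule rmod.intro, fact)
  show ?thesis using assms unfolding rhom_def M.neg_def N.neg_def by simp
qed

lemma hom_add: "rhom A M S N T f \<Longrightarrow> x \<in> S \<Longrightarrow> y \<in> S \<Longrightarrow> f (madd M x y) = madd N (f x) (f y)"
  unfolding rhom_def by blast
lemma hom_act: "rhom A M S N T f \<Longrightarrow> x \<in> S \<Longrightarrow> a \<in> carrier A \<Longrightarrow> f (mact M x a) = mact N (f x) a"
  unfolding rhom_def by blast
lemma hom_into: "rhom A M S N T f \<Longrightarrow> x \<in> S \<Longrightarrow> f x \<in> T"
  unfolding rhom_def by blast


context rmod
begin

definition good_graph :: "'m set \<Rightarrow> ('m \<Rightarrow> 'm) \<Rightarrow> ('m \<times> 'm) set \<Rightarrow> bool" where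
  "good_graph N \<phi> G \<longleftrightarrow> G \<subseteq> mcarrier M \<times> mcarrier M \<and>
     (\<forall>x y y'. (x, y) \<in> G \<longrightarrow> (x, y') \<in> G \<longrightarrow> y = y') \<and>
     (\<forall>x y x' y'. (x, y) \<in> G \<longrightarrow> (x', y') \<in> G \<longrightarrow> (madd M x x', madd M y y') \<in> G) \<and>
     (\<forall>x y a. (x, y) \<in> G \<longrightarrow> a \<in> carrier A \<longrightarrow> (mact M x a, mact M y a) \<in> G) \<and>
     (\<forall>x\<in>N. (x, \<phi> x) \<in> G)"

lemma good_graphD:
  assumes "good_graph N \<phi> G"
  shows "G \<subseteq> mcarrier M \<times> mcarrier M" "\<And>x y y'. (x, y) \<in> G \<Longrightarrow> (x, y') \<in> G \<Longrightarrow> y = y'"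
    "\<And>x y x' y'. (x, y) \<in> G \<Longrightarrow> (x', y') \<in> G \<Longrightarrow> (madd M x x', madd M y y') \<in> G"
    "\<And>x y a. (x, y) \<in> G \<Longrightarrow> a \<in> carrier A \<Longrightarrow> (mact M x a, mact M y a) \<in> G"
    "\<And>x. x \<in> N \<Longrightarrow> (x, \<phi> x) \<in> G"
  using assms unfolding good_graph_def by (elim conjE; blast)+

lemma good_union:
  assumes C: "C \<noteq> {}" "\<And>G. G \<in> C \<Longrightarrow> good_graph N \<phi> G" "\<And>G G'. G \<in> C \<Longrightarrow> G' \<in> C \<Longrightarrow> G \<subseteq> G' \<or> G' \<subseteq> G"
  shows "good_graph N \<phi> (\<Union>C)"
proof -
  have c1: "\<And>G. G \<in> C \<Longrightarrow> G \<subseteq> mcarrier M \<times> mcarrier M"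
    using good_graphD(1)[OF C(2)] by blast
  have c2: "\<And>G x y y'. G \<in> C \<Longrightarrow> (x, y) \<in> G \<Longrightarrow> (x, y') \<in> G \<Longrightarrow> y = y'"
    using good_graphD(2)[OF C(2)] by blast
  have c3: "\<And>G x y x' y'. G \<in> C \<Longrightarrow> (x, y) \<in> G \<Longrightarrow> (x', y') \<in> G \<Longrightarrow> (madd M x x', madd M y y') \<in> G"
    using good_graphD(3)[OF C(2)] by blast
  have c4: "\<And>G x y a. G \<in> C \<Longrightarrow> (x, y) \<in> G \<Longrightarrow> a \<in> carrier A \<Longrightarrow> (mact M x a, mact M y a) \<in> G"
    using good_graphD(4)[OF C(2)] by blast
  have c5: "\<And>G x. G \<in> C \<Longrightarrow> x \<in> N \<Longrightarrow> (x, \<phi> x) \<in> G"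
    using good_graphD(5)[OF C(2)] by blast
  have two: "\<exists>H\<in>C. p \<in> H \<and> q \<in> H" if pq: "p \<in> \<Union>C" "q \<in> \<Union>C" for p q
  proof -
    obtain G G' where g: "G \<in> C" "G' \<in> C" "p \<in> G" "q \<in> G'" using pq by blast
    show ?thesis
    proof (cases "G \<subseteq> G'")
      case True then show ?thesis using g by blast
    next
      case False then have "G' \<subseteq> G" using C(3)[OF g(1,2)] by blast
      then show ?thesis using g by blast
    qed
  qed
  show ?thesis
    unfolding good_graph_def
  proof (intro conjI allI impI ballI)
    show "\<Union>C \<subseteq> mcarrier M \<times> mcarrier M" using c1 by blast
  next
    fix x y y' assume "(x, y) \<in> \<Union>C" "(x, y') \<in> \<Union>C"
    then obtain H where "H \<in> C" "(x, y) \<in> H" "(x, y') \<in> H" using two by blast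
    then show "y = y'" using c2 by blast
  next
    fix x y x' y' assume "(x, y) \<in> \<Union>C" "(x', y') \<in> \<Union>C"
    then obtain H where "H \<in> C" "(x, y) \<in> H" "(x', y') \<in> H" using two by blast
    then show "(madd M x x', madd M y y') \<in> \<Union>C" using c3 by blast
  next
    fix x y a assume "(x, y) \<in> \<Union>C" "a \<in> carrier A"
    then show "(mact M x a, mact M y a) \<in> \<Union>C" using c4 by blast
  next
    fix x assume "x \<in> N"
    then show "(x, \<phi> x) \<in> \<Union>C" using C(1) c5 by blast
  qed
qed

lemma good_base:
  assumes "submodule A M N" "rhom A M N M (mcarrier M) \<phi>"
  shows "good_graph N \<phi> {(x, \<phi> x) | x. x \<in> N}"
  unfolding good_graph_def
proof (intro conjI allI impI ballI)
  show "{(x, \<phi> x) |x. x \<in> N} \<subseteq> mcarrier M \<times> mcarrier M"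
    using assms sub_carrier hom_into by fastforce
  show "\<And>x y y'. (x, y) \<in> {(x, \<phi> x) |x. x \<in> N} \<Longrightarrow> (x, y') \<in> {(x, \<phi> x) |x. x \<in> N} \<Longrightarrow> y = y'"
    by blast
  show "\<And>x y x' y'. (x, y) \<in> {(x, \<phi> x) |x. x \<in> N} \<Longrightarrow> (x', y') \<in> {(x, \<phi> x) |x. x \<in> N} \<Longrightarrow>
     (madd M x x', madd M y y') \<in> {(x, \<phi> x) |x. x \<in> N}"
    using assms sub_add hom_add by fastforce
  show "\<And>x y a. (x, y) \<in> {(x, \<phi> x) |x. x \<in> N} \<Longrightarrow> a \<in> carrier A \<Longrightarrow>
     (mact M x a, mact M y a) \<in> {(x, \<phi> x) |x. x \<in> N}"
    using assms sub_act hom_act by fastforce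
  show "\<And>x. x \<in> N \<Longrightarrow> (x, \<phi> x) \<in> {(x, \<phi> x) |x. x \<in> N}" by blast
qed

lemma good_extend:
  assumes baer: "baer_injective A M" and N: "submodule A M N" and phi: "rhom A M N M (mcarrier M) \<phi>"
    and G: "good_graph N \<phi> G" and x: "x \<in> mcarrier M" "x \<notin> Domain G"
  shows "\<exists>G'. good_graph N \<phi> G' \<and> G \<subseteq> G' \<and> x \<in> Domain G'"
proof -
  interpret ring A by (rule ringA)
  note Gc = good_graphD(1)[OF G] and Gsv = good_graphD(2)[OF G] and Gadd = good_graphD(3)[OF G]
    and Gact = good_graphD(4)[OF G] and Gphi = good_graphD(5)[OF G]
  have phi0: "\<phi> (mzero M) = mzero M" using hom_zero[OF rm rm N _ phi] by simp
  have G00: "(mzero M, mzero M) \<in> G" using Gphi[OF sub_zero[OF N]] phi0 by simp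
  have Gneg: "(neg u, neg v) \<in> G" if "(u, v) \<in> G" for u v
    unfolding neg_def using Gact[OF that] by simp
  define gf where "gf = (\<lambda>d. THE y. (d, y) \<in> G)"
  have gf: "(d, gf d) \<in> G" if dG: "d \<in> Domain G" for d
  proof -
    obtain y where "(d, y) \<in> G" using dG by blast
    then show ?thesis unfolding gf_def using Gsv by (metis theI)
  qed
  have gf_eq: "gf d = y" if "(d, y) \<in> G" for d y
    using gf[of d] that Gsv by blast
  define I where "I = {a \<in> carrier A. mact M x a \<in> Domain G}"
  have I_ideal: "right_ideal A I"
    unfolding right_ideal_def submodule_def regular_rmodule_def
  proof (simp, intro conjI ballI)
    show "I \<subseteq> carrier A" unfolding I_def by blast
    show "\<zero>\<^bsub>A\<^esub> \<in> I" unfolding I_def using x G00 by force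
  next
    fix a b assume "a \<in> I" "b \<in> I"
    then obtain ya yb where "(mact M x a, ya) \<in> G" "(mact M x b, yb) \<in> G" "a \<in> carrier A" "b \<in> carrier A"
      unfolding I_def by blast
    then show "a \<oplus>\<^bsub>A\<^esub> b \<in> I" unfolding I_def using Gadd act_distr2 x by fastforce
  next
    fix a c assume "a \<in> I" "c \<in> carrier A"
    then obtain ya where "(mact M x a, ya) \<in> G" "a \<in> carrier A"
      unfolding I_def by blast
    then show "a \<otimes>\<^bsub>A\<^esub> c \<in> I" unfolding I_def using Gact act_mult x \<open>c \<in> carrier A\<close> by fastforce
  qed
  define f where "f = (\<lambda>a. gf (mact M x a))"
  have fG: "(mact M x a, f a) \<in> G" if "a \<in> I" for a
    using that gf unfolding I_def f_def by blast
  have f_hom: "rhom A (regular_rmodule A) I M (mcarrier M) f"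
    unfolding rhom_def regular_rmodule_def
  proof (simp, intro conjI ballI)
    show "f \<in> I \<rightarrow> mcarrier M" using fG Gc by blast
  next
    fix a b assume ab: "a \<in> I" "b \<in> I"
    then have c: "a \<in> carrier A" "b \<in> carrier A" unfolding I_def by auto
    have "(madd M (mact M x a) (mact M x b), madd M (f a) (f b)) \<in> G" using Gadd fG ab by blast
    then show "f (a \<oplus>\<^bsub>A\<^esub> b) = madd M (f a) (f b)"
      unfolding f_def using gf_eq act_distr2 x c by simp
  next
    fix a c assume ac: "a \<in> I" "c \<in> carrier A"
    then have c: "a \<in> carrier A" unfolding I_def by auto
    have "(mact M (mact M x a) c, mact M (f a) c) \<in> G" using Gact fG ac by blast
    then show "f (a \<otimes>\<^bsub>A\<^esub> c) = mact M (f a) c"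
      unfolding f_def using gf_eq act_mult x c ac by simp
  qed
  obtain e where e: "e \<in> mcarrier M" "\<And>a. a \<in> I \<Longrightarrow> f a = mact M e a"
    using baer I_ideal f_hom unfolding baer_injective_def by blast
  define G' where "G' = {(madd M d (mact M x a), madd M y (mact M e a)) | d y a. (d, y) \<in> G \<and> a \<in> carrier A}"
  have sub': "G \<subseteq> G'"
  proof
    fix p assume "p \<in> G"
    then obtain d y where p: "p = (d, y)" "(d, y) \<in> G" by (cases p) auto
    then have "d \<in> mcarrier M" "y \<in> mcarrier M" using Gc by auto
    then have "p = (madd M d (mact M x \<zero>\<^bsub>A\<^esub>), madd M y (mact M e \<zero>\<^bsub>A\<^esub>))" using p x e by simp
    then show "p \<in> G'" unfolding G'_def using p by blast
  qed
  have xin: "x \<in> Domain G'"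
  proof -
    have "(madd M (mzero M) (mact M x \<one>\<^bsub>A\<^esub>), madd M (mzero M) (mact M e \<one>\<^bsub>A\<^esub>)) \<in> G'"
      unfolding G'_def using G00 by blast
    then show ?thesis using x e by auto
  qed
  have good': "good_graph N \<phi> G'"
    unfolding good_graph_def
  proof (intro conjI allI impI ballI)
    show "G' \<subseteq> mcarrier M \<times> mcarrier M" unfolding G'_def using Gc x e by fastforce
  next
    fix z w w' assume "(z, w) \<in> G'" "(z, w') \<in> G'"
    then obtain d y a d' y' a' where h: "(d, y) \<in> G" "a \<in> carrier A" "(d', y') \<in> G" "a' \<in> carrier A"
      "z = madd M d (mact M x a)" "w = madd M y (mact M e a)"
      "z = madd M d' (mact M x a')" "w' = madd M y' (mact M e a')"
      unfolding G'_def by blast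
    have cd: "d \<in> mcarrier M" "y \<in> mcarrier M" "d' \<in> mcarrier M" "y' \<in> mcarrier M" using h Gc by auto
    define b where "b = a \<oplus>\<^bsub>A\<^esub> \<ominus>\<^bsub>A\<^esub> a'"
    have bc: "b \<in> carrier A" unfolding b_def using h by simp
    have xb: "mact M x b = madd M (mact M x a) (neg (mact M x a'))"
      unfolding b_def using x h act_distr2 act_minus by simp
    have eb: "mact M e b = madd M (mact M e a) (neg (mact M e a'))"
      unfolding b_def using e h act_distr2 act_minus by simp
    have "madd M d (mact M x a) = madd M d' (mact M x a')" using h by simp
    then have xb2: "mact M x b = madd M d' (neg d)" using xb swap_eq cd x h by simp
    have dd: "(madd M d' (neg d), madd M y' (neg y)) \<in> G" using Gadd Gneg h by blast
    then have "b \<in> I" unfolding I_def using bc xb2 by auto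
    then have "(mact M x b, f b) \<in> G" by (rule fG)
    then have "f b = madd M y' (neg y)" using dd xb2 Gsv by simp
    then have "madd M (mact M e a) (neg (mact M e a')) = madd M y' (neg y)" using e \<open>b \<in> I\<close> eb by simp
    then have "madd M (mact M e a) y = madd M y' (mact M e a')"
    proof -
      assume eq: "madd M (mact M e a) (neg (mact M e a')) = madd M y' (neg y)"
      have c2: "mact M e a \<in> mcarrier M" "mact M e a' \<in> mcarrier M" using e h by auto
      have "madd M (madd M (mact M e a) (neg (mact M e a'))) (madd M y (mact M e a')) =
            madd M (mact M e a) y"
      proof -
        have "madd M (madd M (mact M e a) (neg (mact M e a'))) (madd M y (mact M e a')) =
          madd M (mact M e a) (madd M (neg (mact M e a')) (madd M (mact M e a') y))"
          using c2 cd by (simp add: assoc comm[of y])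
        then show ?thesis using c2 cd by simp
      qed
      moreover have "madd M (madd M y' (neg y)) (madd M y (mact M e a')) = madd M y' (mact M e a')"
      proof -
        have "madd M (madd M y' (neg y)) (madd M y (mact M e a')) =
          madd M y' (madd M (neg y) (madd M y (mact M e a')))"
          using c2 cd by (simp add: assoc)
        then show ?thesis using c2 cd by simp
      qed
      ultimately show ?thesis using eq by simp
    qed
    then show "w = w'" using h cd e x comm[of y "mact M e a"] by simp
  next
    fix z w z' w' assume "(z, w) \<in> G'" "(z', w') \<in> G'"
    then obtain d y a d' y' a' where h: "(d, y) \<in> G" "a \<in> carrier A" "(d', y') \<in> G" "a' \<in> carrier A"
      "z = madd M d (mact M x a)" "w = madd M y (mact M e a)"
      "z' = madd M d' (mact M x a')" "w' = madd M y' (mact M e a')"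
      unfolding G'_def by blast
    have cd: "d \<in> mcarrier M" "y \<in> mcarrier M" "d' \<in> mcarrier M" "y' \<in> mcarrier M" using h Gc by auto
    have r: "madd M (madd M p (mact M q a)) (madd M p' (mact M q a')) =
             madd M (madd M p p') (mact M q (a \<oplus>\<^bsub>A\<^esub> a'))"
      if "p \<in> mcarrier M" "p' \<in> mcarrier M" "q \<in> mcarrier M" for p p' q
      using that h by (simp add: act_distr2 add_ac_simps)
    have "(madd M (madd M d d') (mact M x (a \<oplus>\<^bsub>A\<^esub> a')), madd M (madd M y y') (mact M e (a \<oplus>\<^bsub>A\<^esub> a'))) \<in> G'"
      unfolding G'_def using Gadd h by blast
    then show "(madd M z z', madd M w w') \<in> G'" using h r cd x e by simp
  next
    fix z w c assume "(z, w) \<in> G'" and c: "c \<in> carrier A"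
    then obtain d y a where h: "(d, y) \<in> G" "a \<in> carrier A"
      "z = madd M d (mact M x a)" "w = madd M y (mact M e a)"
      unfolding G'_def by blast
    have cd: "d \<in> mcarrier M" "y \<in> mcarrier M" using h Gc by auto
    have "(madd M (mact M d c) (mact M x (a \<otimes>\<^bsub>A\<^esub> c)), madd M (mact M y c) (mact M e (a \<otimes>\<^bsub>A\<^esub> c))) \<in> G'"
      unfolding G'_def using Gact h c by blast
    then show "(mact M z c, mact M w c) \<in> G'" using h cd x e c by (simp add: act_distr1 act_mult)
  next
    fix z assume "z \<in> N"
    then show "(z, \<phi> z) \<in> G'" using sub' Gphi by blast
  qed
  show ?thesis using good' sub' xin by blast
qed

lemma baer_extend:
  assumes baer: "baer_injective A M" and N: "submodule A M N" and phi: "rhom A M N M (mcarrier M) \<phi>"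
  shows "\<exists>h. rhom A M (mcarrier M) M (mcarrier M) h \<and> (\<forall>x\<in>N. h x = \<phi> x)"
proof -
  let ?S = "{G. good_graph N \<phi> G}"
  have "\<forall>C\<in>chains ?S. \<exists>U\<in>?S. \<forall>X\<in>C. X \<subseteq> U"
  proof
    fix C assume C: "C \<in> chains ?S"
    show "\<exists>U\<in>?S. \<forall>X\<in>C. X \<subseteq> U"
    proof (cases "C = {}")
      case True
      then show ?thesis using good_base[OF N phi] by blast
    next
      case False
      have "good_graph N \<phi> (\<Union>C)"
      proof (rule good_union[OF False])
        fix G assume "G \<in> C" then show "good_graph N \<phi> G" using C unfolding chains_def by blast
      next
        fix G G' assume "G \<in> C" "G' \<in> C" then show "G \<subseteq> G' \<or> G' \<subseteq> G"
          using C unfolding chains_def chain_subset_def by blast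
      qed
      then show ?thesis by blast
    qed
  qed
  obtain G where G: "good_graph N \<phi> G" and Gmax: "\<And>X. good_graph N \<phi> X \<Longrightarrow> G \<subseteq> X \<Longrightarrow> X = G"
  proof -
    obtain G where "G \<in> ?S" "\<forall>X\<in>?S. G \<subseteq> X \<longrightarrow> X = G" using Zorn_Lemma2[of ?S] \<open>\<forall>C\<in>chains ?S. _\<close> by blast
    then show ?thesis using that by blast
  qed
  have dom: "Domain G = mcarrier M"
  proof
    show "Domain G \<subseteq> mcarrier M" using good_graphD(1)[OF G] by blast
    show "mcarrier M \<subseteq> Domain G"
    proof
      fix x assume x: "x \<in> mcarrier M"
      show "x \<in> Domain G"
      proof (rule ccontr)
        assume "x \<notin> Domain G"
        then obtain G' where "good_graph N \<phi> G'" "G \<subseteq> G'" "x \<in> Domain G'"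
          using good_extend[OF baer N phi G x] by blast
        then show False using Gmax \<open>x \<notin> Domain G\<close> by blast
      qed
    qed
  qed
  note Gc = good_graphD(1)[OF G] and Gsv = good_graphD(2)[OF G] and Gadd = good_graphD(3)[OF G]
    and Gact = good_graphD(4)[OF G] and Gphi = good_graphD(5)[OF G]
  define h where "h = (\<lambda>d. THE y. (d, y) \<in> G)"
  have hG: "(d, h d) \<in> G" if dM: "d \<in> mcarrier M" for d
  proof -
    obtain y where "(d, y) \<in> G" using dM dom by blast
    then show ?thesis unfolding h_def using Gsv by (metis theI)
  qed
  have h_eq: "h d = y" if "(d, y) \<in> G" for d y
    using hG[of d] that Gsv Gc by blast
  have "rhom A M (mcarrier M) M (mcarrier M) h"
    unfolding rhom_def
  proof (intro conjI ballI)
    show "h \<in> mcarrier M \<rightarrow> mcarrier M" using hG Gc by blast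
  next
    fix u v assume "u \<in> mcarrier M" "v \<in> mcarrier M"
    then show "h (madd M u v) = madd M (h u) (h v)" using hG Gadd h_eq by blast
  next
    fix u a assume "u \<in> mcarrier M" "a \<in> carrier A"
    then show "h (mact M u a) = mact M (h u) a" using hG Gact h_eq by blast
  qed
  moreover have "\<forall>x\<in>N. h x = \<phi> x" using Gphi h_eq by blast
  ultimately show ?thesis by blast
qed

end


lemma image_sub:
  assumes "rmodule A M" "rmodule A N" "submodule A M S" "T \<subseteq> mcarrier N" "rhom A M S N T f"
  shows "submodule A N (f ` S)"
proof -
  interpret M: rmod A M by (rule rmod.intro, fact)
  have "f (mzero M) = mzero N" using hom_zero[OF assms] .
  then have "mzero N \<in> f ` S" using M.sub_zero[OF assms(3)] rev_image_eqI[of "mzero M" S "mzero N" f] by simp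
  moreover have "f ` S \<subseteq> mcarrier N" using assms(4) hom_into[OF assms(5)] by auto
  moreover have "\<forall>x\<in>f ` S. \<forall>y\<in>f ` S. madd N x y \<in> f ` S"
  proof (intro ballI)
    fix x y assume "x \<in> f ` S" "y \<in> f ` S"
    then obtain u v where "u \<in> S" "v \<in> S" "x = f u" "y = f v" by blast
    then have "madd N x y = f (madd M u v)" "madd M u v \<in> S"
      using hom_add[OF assms(5)] M.sub_add[OF assms(3)] by auto
    then show "madd N x y \<in> f ` S" by simp
  qed
  moreover have "\<forall>x\<in>f ` S. \<forall>a\<in>carrier A. mact N x a \<in> f ` S"
  proof (intro ballI)
    fix x a assume "x \<in> f ` S" "a \<in> carrier A"
    then obtain u where "u \<in> S" "x = f u" by blast
    then have "mact N x a = f (mact M u a)" "mact M u a \<in> S"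
      using hom_act[OF assms(5)] M.sub_act[OF assms(3)] \<open>a \<in> carrier A\<close> by auto
    then show "mact N x a \<in> f ` S" by simp
  qed
  ultimately show ?thesis unfolding submodule_def by blast
qed

lemma preimage_sub:
  assumes "rmodule A M" "rmodule A N" "submodule A M S" "T \<subseteq> mcarrier N" "rhom A M S N T f"
    "submodule A N V"
  shows "submodule A M {x \<in> S. f x \<in> V}"
proof -
  interpret M: rmod A M by (rule rmod.intro, fact)
  interpret N: rmod A N by (rule rmod.intro, fact)
  have "f (mzero M) = mzero N" using hom_zero[OF assms(1-5)] .
  then have "mzero M \<in> {x \<in> S. f x \<in> V}" using M.sub_zero[OF assms(3)] N.sub_zero[OF assms(6)] by simp
  moreover have "{x \<in> S. f x \<in> V} \<subseteq> mcarrier M" using M.sub_carrier[OF assms(3)] by blast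
  moreover have "\<forall>x\<in>{x \<in> S. f x \<in> V}. \<forall>y\<in>{x \<in> S. f x \<in> V}. madd M x y \<in> {x \<in> S. f x \<in> V}"
    using assms M.sub_add N.sub_add hom_add by fastforce
  moreover have "\<forall>x\<in>{x \<in> S. f x \<in> V}. \<forall>a\<in>carrier A. mact M x a \<in> {x \<in> S. f x \<in> V}"
    using assms M.sub_act N.sub_act hom_act by fastforce
  ultimately show ?thesis unfolding submodule_def by blast
qed

context rmod
begin

lemma ker_sub:
  assumes "rhom A M (mcarrier M) M (mcarrier M) h"
  shows "submodule A M {x \<in> mcarrier M. h x = mzero M}"
  using preimage_sub[OF rm rm sub_full _ assms sub_triv] by simp

lemma inj_endo_surj:
  assumes baer: "baer_injective A M"
    and unif: "\<And>U V. submodule A M U \<Longrightarrow> submodule A M V \<Longrightarrow> U \<inter> V = {mzero M} \<Longrightarrow> U = {mzero M} \<or> V = {mzero M}"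
    and h: "rhom A M (mcarrier M) M (mcarrier M) h" and inj: "inj_on h (mcarrier M)"
  shows "h ` mcarrier M = mcarrier M"
proof -
  have h0: "h (mzero M) = mzero M" using hom_zero[OF rm rm sub_full _ h] by simp
  have hc: "\<And>x. x \<in> mcarrier M \<Longrightarrow> h x \<in> mcarrier M" using hom_into[OF h] by blast
  let ?H = "h ` mcarrier M"
  have Hsub: "submodule A M ?H" using image_sub[OF rm rm sub_full _ h] by simp
  define \<psi> where "\<psi> = inv_into (mcarrier M) h"
  have psi: "\<psi> (h x) = x" if "x \<in> mcarrier M" for x unfolding \<psi>_def using inj that by simp
  have psi_hom: "rhom A M ?H M (mcarrier M) \<psi>"
    unfolding rhom_def
  proof (intro conjI ballI)
    show "\<psi> \<in> ?H \<rightarrow> mcarrier M" using psi by auto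
  next
    fix u v assume "u \<in> ?H" "v \<in> ?H"
    then obtain x y where "x \<in> mcarrier M" "y \<in> mcarrier M" "u = h x" "v = h y" by blast
    then show "\<psi> (madd M u v) = madd M (\<psi> u) (\<psi> v)" using psi[of "madd M x y"] psi hom_add[OF h, of x y] by simp
  next
    fix u a assume "u \<in> ?H" "a \<in> carrier A"
    then obtain x where "x \<in> mcarrier M" "u = h x" by blast
    then show "\<psi> (mact M u a) = mact M (\<psi> u) a" using psi[of "mact M x a"] psi hom_act[OF h, of x a] \<open>a \<in> carrier A\<close> by simp
  qed
  obtain q where q: "rhom A M (mcarrier M) M (mcarrier M) q" and qh: "\<And>x. x \<in> ?H \<Longrightarrow> q x = \<psi> x"
    using baer_extend[OF baer Hsub psi_hom] by blast
  have qh': "q (h x) = x" if xM: "x \<in> mcarrier M" for x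
  proof -
    have "h x \<in> ?H" using xM by blast
    then show ?thesis using qh[of "h x"] psi[OF xM] by simp
  qed
  have qc: "\<And>x. x \<in> mcarrier M \<Longrightarrow> q x \<in> mcarrier M" using hom_into[OF q] by blast
  let ?K = "{x \<in> mcarrier M. q x = mzero M}"
  have Ksub: "submodule A M ?K" using ker_sub[OF q] .
  have KH: "?K \<inter> ?H = {mzero M}"
  proof
    show "?K \<inter> ?H \<subseteq> {mzero M}"
    proof
      fix z assume "z \<in> ?K \<inter> ?H"
      then obtain x where "x \<in> mcarrier M" "z = h x" "q z = mzero M" by blast
      then show "z \<in> {mzero M}" using qh' h0 by auto
    qed
    show "{mzero M} \<subseteq> ?K \<inter> ?H" using sub_zero[OF Ksub] sub_zero[OF Hsub] by blast
  qed
  show ?thesis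
  proof (cases "?H = {mzero M}")
    case True
    have "mcarrier M \<subseteq> {mzero M}"
    proof
      fix x assume x: "x \<in> mcarrier M"
      then have "h x \<in> ?H" by blast
      then have "h x = h (mzero M)" using True h0 by simp
      then show "x \<in> {mzero M}" using inj x unfolding inj_on_def by simp
    qed
    then show ?thesis using True by auto
  next
    case False
    then have K0: "?K = {mzero M}" using unif[OF Ksub Hsub KH] by blast
    show ?thesis
    proof
      show "?H \<subseteq> mcarrier M" using hc by blast
      show "mcarrier M \<subseteq> ?H"
      proof
        fix y assume y: "y \<in> mcarrier M"
        let ?z = "madd M y (neg (h (q y)))"
        have "q ?z = madd M (q y) (neg (q (h (q y))))"
          using hom_add[OF q] hom_neg[OF rm rm _ q] y qc hc by simp
        also have "\<dots> = mzero M" using qh' qc y by simp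
        finally have "?z \<in> ?K" using y qc hc by simp
        then have "?z = mzero M" using K0 by blast
        then have "y = h (q y)" using diff_zero_iff y qc hc by simp
        then show "y \<in> ?H" using y qc by blast
      qed
    qed
  qed
qed

end


lemma rhom_mono: "rhom A M S N T f \<Longrightarrow> S' \<subseteq> S \<Longrightarrow> rhom A M S' N T f"
  unfolding rhom_def by blast

lemma uniform_ai_qi:
  fixes A :: "('r, 'b) ring_scheme" and Y :: "('m, 'r) rmodule"
  assumes Y: "rmodule A Y" and K: "submodule A Y K" and U: "uniform A Y K"
    and ai: "aut_invariant TYPE('e) A Y K"
  shows "quasi_injective A Y K"
proof -
  obtain E :: "('e, 'r) rmodule" and \<iota> where hull: "injective_hull A Y K E \<iota>"
    using ai unfolding aut_invariant_def by blast
  have inv: "\<And>\<sigma>. rautomorphism A E \<sigma> \<Longrightarrow> \<sigma> ` (\<iota> ` K) \<subseteq> \<iota> ` K"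
    using ai hull unfolding aut_invariant_def by blast
  have E: "rmodule A E" and baer: "baer_injective A E" and ih: "rhom A Y K E (mcarrier E) \<iota>"
    and iinj: "inj_on \<iota> K" and ess: "essential_in A E (\<iota> ` K) (mcarrier E)"
    using hull unfolding injective_hull_def by blast+
  interpret Ym: rmod A Y by (rule rmod.intro, fact)
  interpret Em: rmod A E by (rule rmod.intro, fact)
  have i0: "\<iota> (mzero Y) = mzero E" using hom_zero[OF Y E K _ ih] by simp
  have ic: "\<And>k. k \<in> K \<Longrightarrow> \<iota> k \<in> mcarrier E" using hom_into[OF ih] by blast
  have Kc: "K \<subseteq> mcarrier Y" using Ym.sub_carrier[OF K] .
  have IK: "submodule A E (\<iota> ` K)" using image_sub[OF Y E K _ ih] by simp
  have essAll: "\<forall>W. submodule A E W \<and> W \<subseteq> mcarrier E \<and> W \<noteq> {mzero E} \<longrightarrow> W \<inter> \<iota> ` K \<noteq> {mzero E}"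
    using ess unfolding essential_in_def by (elim conjE)
  have essW: "W \<inter> \<iota> ` K \<noteq> {mzero E}" if W: "submodule A E W" "W \<noteq> {mzero E}" for W
    using essAll W Em.sub_carrier[OF W(1)] by blast
  have Kunif: "\<And>U V. submodule A Y U \<Longrightarrow> submodule A Y V \<Longrightarrow> U \<subseteq> K \<Longrightarrow> V \<subseteq> K \<Longrightarrow>
      U \<noteq> {mzero Y} \<Longrightarrow> V \<noteq> {mzero Y} \<Longrightarrow> U \<inter> V \<noteq> {mzero Y}"
  proof -
    have "\<forall>U V. submodule A Y U \<and> submodule A Y V \<and> U \<subseteq> K \<and> V \<subseteq> K \<and>
        U \<noteq> {mzero Y} \<and> V \<noteq> {mzero Y} \<longrightarrow> U \<inter> V \<noteq> {mzero Y}"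
      using U unfolding uniform_def by (rule conjunct2)
    then show "\<And>U V. submodule A Y U \<Longrightarrow> submodule A Y V \<Longrightarrow> U \<subseteq> K \<Longrightarrow> V \<subseteq> K \<Longrightarrow>
      U \<noteq> {mzero Y} \<Longrightarrow> V \<noteq> {mzero Y} \<Longrightarrow> U \<inter> V \<noteq> {mzero Y}" by blast
  qed
  have pre_nz: "{k \<in> K. \<iota> k \<in> W} \<noteq> {mzero Y}" if W: "submodule A E W" "W \<noteq> {mzero E}" for W
  proof -
    have ne: "W \<inter> \<iota> ` K \<noteq> {mzero E}" using essW[OF W] .
    have sb: "submodule A E (W \<inter> \<iota> ` K)" using Em.sub_inter[OF W(1) IK] .
    obtain e where e: "e \<in> W \<inter> \<iota> ` K" "e \<noteq> mzero E" using Em.nonzero_elem[OF ne sb] by blast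
    from e(1) obtain k where k: "k \<in> K" "e = \<iota> k" by blast
    have "k \<noteq> mzero Y"
    proof
      assume "k = mzero Y" then have "e = mzero E" using k(2) i0 by simp
      then show False using e(2) by simp
    qed
    moreover have "k \<in> {k \<in> K. \<iota> k \<in> W}" using k e(1) by blast
    ultimately show ?thesis by blast
  qed
  have unifE: "U = {mzero E} \<or> V = {mzero E}"
    if UV: "submodule A E U" "submodule A E V" "U \<inter> V = {mzero E}" for U V
  proof (rule ccontr)
    assume "\<not> (U = {mzero E} \<or> V = {mzero E})"
    then have nz: "U \<noteq> {mzero E}" "V \<noteq> {mzero E}" by auto
    have s1: "submodule A Y {k \<in> K. \<iota> k \<in> U}" using preimage_sub[OF Y E K _ ih UV(1)] by simp
    have s2: "submodule A Y {k \<in> K. \<iota> k \<in> V}" using preimage_sub[OF Y E K _ ih UV(2)] by simp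
    have ne: "{k \<in> K. \<iota> k \<in> U} \<inter> {k \<in> K. \<iota> k \<in> V} \<noteq> {mzero Y}"
      by (rule Kunif[OF s1 s2 _ _ pre_nz[OF UV(1) nz(1)] pre_nz[OF UV(2) nz(2)]]) auto
    have sb: "submodule A Y ({k \<in> K. \<iota> k \<in> U} \<inter> {k \<in> K. \<iota> k \<in> V})" using Ym.sub_inter[OF s1 s2] .
    obtain k where k0: "k \<in> {k \<in> K. \<iota> k \<in> U} \<inter> {k \<in> K. \<iota> k \<in> V}" "k \<noteq> mzero Y"
      using Ym.nonzero_elem[OF ne sb] by blast
    then have k: "k \<in> K" "\<iota> k \<in> U" "\<iota> k \<in> V" "k \<noteq> mzero Y" by auto
    then have "\<iota> k \<in> U \<inter> V" by blast
    then have "\<iota> k = \<iota> (mzero Y)" using UV(3) i0 by simp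
    moreover have "mzero Y \<in> K" using Ym.sub_zero[OF K] .
    ultimately have "k = mzero Y" using iinj k(1) unfolding inj_on_def by blast
    then show False using k(4) by blast
  qed
  show ?thesis
    unfolding quasi_injective_def
  proof (intro allI impI, elim conjE)
    fix X1 f assume X1: "submodule A Y X1" "X1 \<subseteq> K" and f: "rhom A Y X1 Y K f"
    define \<iota>' where "\<iota>' = inv_into K \<iota>"
    have ii: "\<And>k. k \<in> K \<Longrightarrow> \<iota>' (\<iota> k) = k" unfolding \<iota>'_def using iinj by simp
    have fK: "\<And>x. x \<in> X1 \<Longrightarrow> f x \<in> K" using hom_into[OF f] by blast
    have ih1: "rhom A Y X1 E (mcarrier E) \<iota>" using rhom_mono[OF ih X1(2)] .
    have Nsub: "submodule A E (\<iota> ` X1)" using image_sub[OF Y E X1(1) _ ih1] by simp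
    define \<phi> where "\<phi> = (\<lambda>e. \<iota> (f (\<iota>' e)))"
    have phi_i: "\<phi> (\<iota> x) = \<iota> (f x)" if xX: "x \<in> X1" for x
    proof -
      have "x \<in> K" using xX X1(2) by blast
      then show ?thesis unfolding \<phi>_def using ii by simp
    qed
    have phi_hom: "rhom A E (\<iota> ` X1) E (mcarrier E) \<phi>"
      unfolding rhom_def
    proof (intro conjI ballI)
      show "\<phi> \<in> \<iota> ` X1 \<rightarrow> mcarrier E"
      proof
        fix e assume "e \<in> \<iota> ` X1"
        then obtain x where "x \<in> X1" "e = \<iota> x" by blast
        then show "\<phi> e \<in> mcarrier E" using phi_i ic fK by simp
      qed
    next
      fix u v assume "u \<in> \<iota> ` X1" "v \<in> \<iota> ` X1"
      then obtain x y where xy: "x \<in> X1" "y \<in> X1" "u = \<iota> x" "v = \<iota> y" by blast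
      have s: "madd Y x y \<in> X1" using Ym.sub_add[OF X1(1) xy(1,2)] .
      have "x \<in> K" "y \<in> K" using xy X1(2) by auto
      then have "madd E u v = \<iota> (madd Y x y)" using hom_add[OF ih] xy by simp
      then have "\<phi> (madd E u v) = \<iota> (f (madd Y x y))" using phi_i[OF s] by simp
      also have "\<dots> = \<iota> (madd Y (f x) (f y))" using hom_add[OF f xy(1,2)] by simp
      also have "\<dots> = madd E (\<iota> (f x)) (\<iota> (f y))" using hom_add[OF ih] fK xy by simp
      finally show "\<phi> (madd E u v) = madd E (\<phi> u) (\<phi> v)" using phi_i xy by simp
    next
      fix u a assume "u \<in> \<iota> ` X1" and a: "a \<in> carrier A"
      then obtain x where x: "x \<in> X1" "u = \<iota> x" by blast
      have s: "mact Y x a \<in> X1" using Ym.sub_act[OF X1(1) x(1) a] .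
      have "x \<in> K" using x X1(2) by auto
      then have "mact E u a = \<iota> (mact Y x a)" using hom_act[OF ih] x a by simp
      then have "\<phi> (mact E u a) = \<iota> (f (mact Y x a))" using phi_i[OF s] by simp
      also have "\<dots> = \<iota> (mact Y (f x) a)" using hom_act[OF f x(1) a] by simp
      also have "\<dots> = mact E (\<iota> (f x)) a" using hom_act[OF ih] fK x a by simp
      finally show "\<phi> (mact E u a) = mact E (\<phi> u) a" using phi_i x by simp
    qed
    obtain h where h: "rhom A E (mcarrier E) E (mcarrier E) h" and hphi: "\<And>e. e \<in> \<iota> ` X1 \<Longrightarrow> h e = \<phi> e"
      using Em.baer_extend[OF baer Nsub phi_hom] by blast
    have hc: "\<And>e. e \<in> mcarrier E \<Longrightarrow> h e \<in> mcarrier E" using hom_into[OF h] by blast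
    have h0: "h (mzero E) = mzero E" using hom_zero[OF E E Em.sub_full _ h] by simp
    have hK: "h (\<iota> k) \<in> \<iota> ` K" if k: "k \<in> K" for k
    proof (cases "inj_on h (mcarrier E)")
      case True
      have "h ` mcarrier E = mcarrier E" using Em.inj_endo_surj[OF baer unifE h True] by blast
      then have "rautomorphism A E h" unfolding rautomorphism_def bij_betw_def using h True by blast
      then show ?thesis using inv k by blast
    next
      case False
      then obtain a b where ab: "a \<in> mcarrier E" "b \<in> mcarrier E" "a \<noteq> b" "h a = h b"
        unfolding inj_on_def by blast
      define z where "z = madd E a (Em.neg b)"
      have zc: "z \<in> mcarrier E" unfolding z_def using ab by simp
      have z0: "z \<noteq> mzero E" unfolding z_def using Em.diff_zero_iff ab by simp
      have hz: "h z = mzero E" unfolding z_def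
        using hom_add[OF h] hom_neg[OF E E _ h] ab hc by simp
      define \<sigma> where "\<sigma> = (\<lambda>e. madd E e (h e))"
      have sc: "\<And>e. e \<in> mcarrier E \<Longrightarrow> \<sigma> e \<in> mcarrier E" unfolding \<sigma>_def using hc by simp
      have s_hom: "rhom A E (mcarrier E) E (mcarrier E) \<sigma>"
        unfolding rhom_def
      proof (intro conjI ballI)
        show "\<sigma> \<in> mcarrier E \<rightarrow> mcarrier E" using sc by blast
      next
        fix u v assume uv: "u \<in> mcarrier E" "v \<in> mcarrier E"
        show "\<sigma> (madd E u v) = madd E (\<sigma> u) (\<sigma> v)"
          unfolding \<sigma>_def using hom_add[OF h uv] uv hc by (simp add: Em.add_ac_simps)
      next
        fix u c assume uc: "u \<in> mcarrier E" "c \<in> carrier A"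
        show "\<sigma> (mact E u c) = mact E (\<sigma> u) c"
          unfolding \<sigma>_def using hom_act[OF h uc] uc hc Em.act_distr1 by simp
      qed
      let ?Kh = "{e \<in> mcarrier E. h e = mzero E}"
      let ?Ks = "{e \<in> mcarrier E. \<sigma> e = mzero E}"
      have "?Kh \<inter> ?Ks = {mzero E}"
      proof
        show "?Kh \<inter> ?Ks \<subseteq> {mzero E}" unfolding \<sigma>_def by auto
        show "{mzero E} \<subseteq> ?Kh \<inter> ?Ks" using h0 unfolding \<sigma>_def by simp
      qed
      then have "?Kh = {mzero E} \<or> ?Ks = {mzero E}" using unifE Em.ker_sub[OF h] Em.ker_sub[OF s_hom] by blast
      moreover have "?Kh \<noteq> {mzero E}" using zc z0 hz by blast
      ultimately have Ks0: "?Ks = {mzero E}" by blast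
      have sinj: "inj_on \<sigma> (mcarrier E)"
      proof (rule inj_onI)
        fix u v assume uv: "u \<in> mcarrier E" "v \<in> mcarrier E" "\<sigma> u = \<sigma> v"
        have "\<sigma> (madd E u (Em.neg v)) = madd E (\<sigma> u) (Em.neg (\<sigma> v))"
          using hom_add[OF s_hom] hom_neg[OF E E _ s_hom] uv by simp
        also have "\<dots> = mzero E" using uv sc by simp
        finally have "madd E u (Em.neg v) \<in> ?Ks" using uv by simp
        then have "madd E u (Em.neg v) = mzero E" using Ks0 by blast
        then show "u = v" using Em.diff_zero_iff uv by simp
      qed
      have "\<sigma> ` mcarrier E = mcarrier E" using Em.inj_endo_surj[OF baer unifE s_hom sinj] by blast
      then have "rautomorphism A E \<sigma>" unfolding rautomorphism_def bij_betw_def using s_hom sinj by blast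
      then have sK: "\<sigma> (\<iota> k) \<in> \<iota> ` K" using inv k by blast
      have nK: "Em.neg (\<iota> k) \<in> \<iota> ` K" using Em.sub_neg[OF IK] k by blast
      have "h (\<iota> k) = madd E (\<sigma> (\<iota> k)) (Em.neg (\<iota> k))"
      proof -
        have c: "\<iota> k \<in> mcarrier E" "h (\<iota> k) \<in> mcarrier E" using ic[OF k] hc[OF ic[OF k]] by auto
        have "madd E (\<sigma> (\<iota> k)) (Em.neg (\<iota> k)) = madd E (madd E (h (\<iota> k)) (\<iota> k)) (Em.neg (\<iota> k))"
          unfolding \<sigma>_def using c Em.comm by simp
        also have "\<dots> = madd E (h (\<iota> k)) (madd E (\<iota> k) (Em.neg (\<iota> k)))" using c Em.assoc by simp
        finally show ?thesis using c by simp
      qed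
      then show ?thesis using Em.sub_add[OF IK sK nK] by simp
    qed
    define g where "g = (\<lambda>k. \<iota>' (h (\<iota> k)))"
    have gK: "g k \<in> K" and ig: "\<iota> (g k) = h (\<iota> k)" if k: "k \<in> K" for k
      using hK[OF k] unfolding g_def \<iota>'_def by (auto simp: inv_into_into f_inv_into_f)
    have g_hom: "rhom A Y K Y K g"
      unfolding rhom_def
    proof (intro conjI ballI)
      show "g \<in> K \<rightarrow> K" using gK by blast
    next
      fix x y assume xy: "x \<in> K" "y \<in> K"
      have s: "madd Y (g x) (g y) \<in> K" using Ym.sub_add[OF K gK[OF xy(1)] gK[OF xy(2)]] .
      have "h (\<iota> (madd Y x y)) = h (madd E (\<iota> x) (\<iota> y))" using hom_add[OF ih xy] by simp
      also have "\<dots> = madd E (h (\<iota> x)) (h (\<iota> y))" using hom_add[OF h] ic xy by simp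
      also have "\<dots> = madd E (\<iota> (g x)) (\<iota> (g y))" using ig xy by simp
      also have "\<dots> = \<iota> (madd Y (g x) (g y))" using hom_add[OF ih] gK xy by simp
      finally have eq: "h (\<iota> (madd Y x y)) = \<iota> (madd Y (g x) (g y))" .
      have "g (madd Y x y) = \<iota>' (h (\<iota> (madd Y x y)))" unfolding g_def by simp
      then show "g (madd Y x y) = madd Y (g x) (g y)" using eq ii[OF s] by simp
    next
      fix x c assume xc: "x \<in> K" "c \<in> carrier A"
      have s: "mact Y (g x) c \<in> K" using Ym.sub_act[OF K gK[OF xc(1)] xc(2)] .
      have "h (\<iota> (mact Y x c)) = h (mact E (\<iota> x) c)" using hom_act[OF ih xc] by simp
      also have "\<dots> = mact E (h (\<iota> x)) c" using hom_act[OF h] ic xc by simp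
      also have "\<dots> = mact E (\<iota> (g x)) c" using ig xc by simp
      also have "\<dots> = \<iota> (mact Y (g x) c)" using hom_act[OF ih] gK xc by simp
      finally have eq: "h (\<iota> (mact Y x c)) = \<iota> (mact Y (g x) c)" .
      have "g (mact Y x c) = \<iota>' (h (\<iota> (mact Y x c)))" unfolding g_def by simp
      then show "g (mact Y x c) = mact Y (g x) c" using eq ii[OF s] by simp
    qed
    have "\<forall>x\<in>X1. g x = f x"
    proof
      fix x assume x: "x \<in> X1"
      have "\<iota> x \<in> \<iota> ` X1" using x by blast
      then have "h (\<iota> x) = \<iota> (f x)" using hphi[of "\<iota> x"] phi_i[OF x] by simp
      then show "g x = f x" unfolding g_def using ii fK[OF x] by simp
    qed
    then show "\<exists>g. rhom A Y K Y K g \<and> (\<forall>x\<in>X1. g x = f x)" using g_hom by blast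
  qed
qed


lemma ne0_mono: "X \<noteq> {z} \<Longrightarrow> z \<in> X \<Longrightarrow> X \<subseteq> Z \<Longrightarrow> Z \<noteq> {z}"
  by blast

lemma essential_refl:
  assumes "rmodule A M" "submodule A M U" shows "essential_in A M U U"
proof -
  interpret M: rmod A M by (rule rmod.intro, fact)
  show ?thesis unfolding essential_in_def using assms(2) by (auto simp add: Int_absorb2)
qed

lemma closure_exists:
  fixes A :: "('r, 'b) ring_scheme" and Y :: "('m, 'r) rmodule"
  assumes Y: "rmodule A Y" and U: "submodule A Y U" and Uu: "uniform A Y U"
  shows "\<exists>K. submodule A Y K \<and> closed_in A Y K (mcarrier Y) \<and> uniform A Y K"
proof -
  interpret Ym: rmod A Y by (rule rmod.intro, fact)
  let ?S = "{K. essential_in A Y U K}"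
  have essD: "W \<inter> U \<noteq> {mzero Y}"
    if "essential_in A Y U K" "submodule A Y W" "W \<subseteq> K" "W \<noteq> {mzero Y}" for K W
  proof -
    have "\<forall>W. submodule A Y W \<and> W \<subseteq> K \<and> W \<noteq> {mzero Y} \<longrightarrow> W \<inter> U \<noteq> {mzero Y}"
      using that(1) unfolding essential_in_def by (elim conjE)
    then show ?thesis using that(2-4) by blast
  qed
  have essI: "essential_in A Y U K"
    if "submodule A Y K" "U \<subseteq> K" "\<And>W. submodule A Y W \<Longrightarrow> W \<subseteq> K \<Longrightarrow> W \<noteq> {mzero Y} \<Longrightarrow> W \<inter> U \<noteq> {mzero Y}" for K
    unfolding essential_in_def using that U by blast
  have essS: "submodule A Y K" "U \<subseteq> K" if "essential_in A Y U K" for K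
    using that unfolding essential_in_def by auto
  have "\<forall>C\<in>chains ?S. \<exists>X\<in>?S. \<forall>Z\<in>C. Z \<subseteq> X"
  proof
    fix C assume C: "C \<in> chains ?S"
    then have CS: "\<And>K. K \<in> C \<Longrightarrow> essential_in A Y U K" unfolding chains_def by blast
    have Cch: "\<And>K K'. K \<in> C \<Longrightarrow> K' \<in> C \<Longrightarrow> K \<subseteq> K' \<or> K' \<subseteq> K"
      using C unfolding chains_def chain_subset_def by blast
    show "\<exists>X\<in>?S. \<forall>Z\<in>C. Z \<subseteq> X"
    proof (cases "C = {}")
      case True
      then show ?thesis using essential_refl[OF Y U] by blast
    next
      case False
      then obtain K0 where K0: "K0 \<in> C" by blast
      have two: "\<exists>H\<in>C. p \<in> H \<and> q \<in> H" if pq: "p \<in> \<Union>C" "q \<in> \<Union>C" for p q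
      proof -
        obtain G G' where g: "G \<in> C" "G' \<in> C" "p \<in> G" "q \<in> G'" using pq by blast
        show ?thesis
        proof (cases "G \<subseteq> G'")
          case True then show ?thesis using g by blast
        next
          case False then have "G' \<subseteq> G" using Cch[OF g(1,2)] by blast
          then show ?thesis using g by blast
        qed
      qed
      have subC: "submodule A Y (\<Union>C)"
        unfolding submodule_def
      proof (intro conjI ballI)
        show "\<Union>C \<subseteq> mcarrier Y" using CS essS(1) Ym.sub_carrier by blast
        show "mzero Y \<in> \<Union>C" using K0 CS essS(1) Ym.sub_zero by blast
      next
        fix x y assume "x \<in> \<Union>C" "y \<in> \<Union>C"
        then obtain H where "H \<in> C" "x \<in> H" "y \<in> H" using two by blast
        then show "madd Y x y \<in> \<Union>C" using CS essS(1) Ym.sub_add by blast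
      next
        fix x a assume "x \<in> \<Union>C" "a \<in> carrier A"
        then obtain H where "H \<in> C" "x \<in> H" by blast
        then show "mact Y x a \<in> \<Union>C" using CS essS(1) Ym.sub_act \<open>a \<in> carrier A\<close> by blast
      qed
      have "essential_in A Y U (\<Union>C)"
      proof (rule essI[OF subC])
        show "U \<subseteq> \<Union>C" using K0 CS essS(2) by blast
      next
        fix W assume W: "submodule A Y W" "W \<subseteq> \<Union>C" "W \<noteq> {mzero Y}"
        obtain w where w: "w \<in> W" "w \<noteq> mzero Y" using Ym.nonzero_elem[OF W(3,1)] by blast
        then obtain H where H: "H \<in> C" "w \<in> H" using W(2) by blast
        have wc: "w \<in> mcarrier Y" using w(1) Ym.sub_carrier[OF W(1)] by blast
        have cs: "submodule A Y (Ym.cyc w)" using Ym.cyc_sub[OF wc] .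
        have c1: "Ym.cyc w \<subseteq> H" using Ym.cyc_min[OF essS(1)[OF CS[OF H(1)]] H(2)] .
        have c2: "Ym.cyc w \<subseteq> W" using Ym.cyc_min[OF W(1) w(1)] .
        have "Ym.cyc w \<noteq> {mzero Y}" using Ym.cyc_self[OF wc] w(2) by blast
        then have "Ym.cyc w \<inter> U \<noteq> {mzero Y}" using essD[OF CS[OF H(1)] cs c1] by blast
        moreover have "mzero Y \<in> Ym.cyc w \<inter> U" using Ym.sub_zero[OF cs] Ym.sub_zero[OF U] by blast
        ultimately show "W \<inter> U \<noteq> {mzero Y}" using ne0_mono[of "Ym.cyc w \<inter> U" "mzero Y" "W \<inter> U"] c2 by blast
      qed
      then show ?thesis by blast
    qed
  qed
  then obtain K0 where "K0 \<in> ?S" "\<forall>Z\<in>?S. K0 \<subseteq> Z \<longrightarrow> Z = K0"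
    using Zorn_Lemma2[of ?S] by blast
  then obtain K where K: "essential_in A Y U K" and Kmax: "\<And>Z. essential_in A Y U Z \<Longrightarrow> K \<subseteq> Z \<Longrightarrow> Z = K"
    by blast
  have Ks: "submodule A Y K" "U \<subseteq> K" using essS[OF K] by auto
  have closed: "closed_in A Y K (mcarrier Y)"
    unfolding closed_in_def
  proof (intro conjI allI impI)
    show "submodule A Y K" by (rule Ks(1))
    show "submodule A Y (mcarrier Y)" by (rule Ym.sub_full)
    show "K \<subseteq> mcarrier Y" using Ym.sub_carrier[OF Ks(1)] .
  next
    fix Z assume Z: "submodule A Y Z \<and> Z \<subseteq> mcarrier Y \<and> essential_in A Y K Z"
    then have Zs: "submodule A Y Z" and KZ: "essential_in A Y K Z" by auto
    have KZ': "K \<subseteq> Z" using KZ unfolding essential_in_def by blast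
    have KZall: "\<forall>W. submodule A Y W \<and> W \<subseteq> Z \<and> W \<noteq> {mzero Y} \<longrightarrow> W \<inter> K \<noteq> {mzero Y}"
      using KZ unfolding essential_in_def by (elim conjE)
    have "essential_in A Y U Z"
    proof (rule essI[OF Zs])
      show "U \<subseteq> Z" using Ks(2) KZ' by blast
    next
      fix W assume W: "submodule A Y W" "W \<subseteq> Z" "W \<noteq> {mzero Y}"
      have a: "W \<inter> K \<noteq> {mzero Y}" using KZall W by blast
      have b: "submodule A Y (W \<inter> K)" using Ym.sub_inter[OF W(1) Ks(1)] .
      have "(W \<inter> K) \<inter> U \<noteq> {mzero Y}" using essD[OF K b _ a] by blast
      moreover have "mzero Y \<in> (W \<inter> K) \<inter> U" using Ym.sub_zero[OF b] Ym.sub_zero[OF U] by blast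
      ultimately show "W \<inter> U \<noteq> {mzero Y}" using ne0_mono[of "(W \<inter> K) \<inter> U" "mzero Y" "W \<inter> U"] by blast
    qed
    then show "Z = K" using Kmax KZ' by blast
  qed
  have Uall: "\<forall>U' V. submodule A Y U' \<and> submodule A Y V \<and> U' \<subseteq> U \<and> V \<subseteq> U \<and>
        U' \<noteq> {mzero Y} \<and> V \<noteq> {mzero Y} \<longrightarrow> U' \<inter> V \<noteq> {mzero Y}"
    using Uu unfolding uniform_def by (rule conjunct2)
  have Une: "U \<noteq> {mzero Y}" using Uu unfolding uniform_def by (rule conjunct1)
  have unifK: "uniform A Y K"
    unfolding uniform_def
  proof (intro conjI allI impI)
    show "K \<noteq> {mzero Y}" using ne0_mono[OF Une Ym.sub_zero[OF U] Ks(2)] .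
  next
    fix U' V assume h: "submodule A Y U' \<and> submodule A Y V \<and> U' \<subseteq> K \<and> V \<subseteq> K \<and> U' \<noteq> {mzero Y} \<and> V \<noteq> {mzero Y}"
    then have h1: "submodule A Y U'" "submodule A Y V" "U' \<subseteq> K" "V \<subseteq> K" "U' \<noteq> {mzero Y}" "V \<noteq> {mzero Y}" by auto
    have a: "U' \<inter> U \<noteq> {mzero Y}" using essD[OF K h1(1,3,5)] .
    have b: "V \<inter> U \<noteq> {mzero Y}" using essD[OF K h1(2,4,6)] .
    have sa: "submodule A Y (U' \<inter> U)" using Ym.sub_inter[OF h1(1) U] .
    have sb: "submodule A Y (V \<inter> U)" using Ym.sub_inter[OF h1(2) U] .
    have "(U' \<inter> U) \<inter> (V \<inter> U) \<noteq> {mzero Y}" using Uall sa sb a b by blast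
    moreover have "mzero Y \<in> (U' \<inter> U) \<inter> (V \<inter> U)" using Ym.sub_zero[OF sa] Ym.sub_zero[OF sb] by blast
    ultimately show "U' \<inter> V \<noteq> {mzero Y}" using ne0_mono[of "(U' \<inter> U) \<inter> (V \<inter> U)" "mzero Y" "U' \<inter> V"] by blast
  qed
  show ?thesis using Ks(1) closed unifK by blast
qed


lemma (in ring) ideal_closure:
  assumes "I \<subseteq> carrier R" "\<zero> \<in> I" "\<And>x y. x \<in> I \<Longrightarrow> y \<in> I \<Longrightarrow> x \<oplus> y \<in> I"
    "\<And>x a. x \<in> I \<Longrightarrow> a \<in> carrier R \<Longrightarrow> a \<otimes> x \<in> I"
    "\<And>x a. x \<in> I \<Longrightarrow> a \<in> carrier R \<Longrightarrow> x \<otimes> a \<in> I"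
  shows "ideal I R"
proof (rule idealI)
  show "ring R" by (rule ring_axioms)
  show "subgroup I (add_monoid R)"
  proof (rule subgroup.intro)
    show "I \<subseteq> carrier (add_monoid R)" using assms(1) by simp
    show "\<And>x y. x \<in> I \<Longrightarrow> y \<in> I \<Longrightarrow> x \<otimes>\<^bsub>add_monoid R\<^esub> y \<in> I" using assms(3) by simp
    show "\<one>\<^bsub>add_monoid R\<^esub> \<in> I" using assms(2) by simp
    fix x assume x: "x \<in> I"
    then have xc: "x \<in> carrier R" using assms(1) by blast
    have "inv\<^bsub>add_monoid R\<^esub> x = \<ominus> x" by (simp add: a_inv_def)
    also have "\<dots> = (\<ominus> \<one>) \<otimes> x" using xc l_minus[of "\<one>" x] by simp
    finally show "inv\<^bsub>add_monoid R\<^esub> x \<in> I" using assms(4)[OF x] by simp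
  qed
qed (use assms in auto)

lemma (in ring) ann_left_ideal:
  assumes T: "T \<subseteq> carrier R"
  shows "ideal {z \<in> carrier R. \<forall>t\<in>T. \<forall>a\<in>carrier R. t \<otimes> a \<otimes> z = \<zero>} R"
proof (rule ideal_closure)
  show "{z \<in> carrier R. \<forall>t\<in>T. \<forall>a\<in>carrier R. t \<otimes> a \<otimes> z = \<zero>} \<subseteq> carrier R" by blast
  show "\<zero> \<in> {z \<in> carrier R. \<forall>t\<in>T. \<forall>a\<in>carrier R. t \<otimes> a \<otimes> z = \<zero>}" using T by auto
next
  fix x y assume x: "x \<in> {z \<in> carrier R. \<forall>t\<in>T. \<forall>a\<in>carrier R. t \<otimes> a \<otimes> z = \<zero>}"
    and y: "y \<in> {z \<in> carrier R. \<forall>t\<in>T. \<forall>a\<in>carrier R. t \<otimes> a \<otimes> z = \<zero>}"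
  show "x \<oplus> y \<in> {z \<in> carrier R. \<forall>t\<in>T. \<forall>a\<in>carrier R. t \<otimes> a \<otimes> z = \<zero>}"
  proof (intro CollectI conjI ballI)
    show "x \<oplus> y \<in> carrier R" using x y by simp
    fix t a assume "t \<in> T" "a \<in> carrier R"
    then show "t \<otimes> a \<otimes> (x \<oplus> y) = \<zero>" using x y T r_distr[of x y "t \<otimes> a"] by auto
  qed
next
  fix x c assume x: "x \<in> {z \<in> carrier R. \<forall>t\<in>T. \<forall>a\<in>carrier R. t \<otimes> a \<otimes> z = \<zero>}" and c: "c \<in> carrier R"
  show "c \<otimes> x \<in> {z \<in> carrier R. \<forall>t\<in>T. \<forall>a\<in>carrier R. t \<otimes> a \<otimes> z = \<zero>}"
  proof (intro CollectI conjI ballI)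
    show "c \<otimes> x \<in> carrier R" using x c by simp
    have xc: "x \<in> carrier R" using x by blast
    fix t a assume ta: "t \<in> T" "a \<in> carrier R"
    then have tc: "t \<in> carrier R" using T by blast
    have "t \<otimes> a \<otimes> (c \<otimes> x) = t \<otimes> a \<otimes> c \<otimes> x" using m_assoc[of "t \<otimes> a" c x] tc ta xc c by simp
    also have "\<dots> = t \<otimes> (a \<otimes> c) \<otimes> x" using m_assoc[of t a c] tc ta c by simp
    finally have "t \<otimes> a \<otimes> (c \<otimes> x) = t \<otimes> (a \<otimes> c) \<otimes> x" .
    then show "t \<otimes> a \<otimes> (c \<otimes> x) = \<zero>" using x c ta by simp
  qed
  show "x \<otimes> c \<in> {z \<in> carrier R. \<forall>t\<in>T. \<forall>a\<in>carrier R. t \<otimes> a \<otimes> z = \<zero>}"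
  proof (intro CollectI conjI ballI)
    show "x \<otimes> c \<in> carrier R" using x c by simp
    have xc: "x \<in> carrier R" using x by blast
    fix t a assume ta: "t \<in> T" "a \<in> carrier R"
    then have tc: "t \<in> carrier R" using T by blast
    have "t \<otimes> a \<otimes> (x \<otimes> c) = (t \<otimes> a \<otimes> x) \<otimes> c" using m_assoc[of "t \<otimes> a" x c] tc ta xc c by simp
    then show "t \<otimes> a \<otimes> (x \<otimes> c) = \<zero>" using x c ta by simp
  qed
qed

lemma (in ring) ann_right_ideal:
  assumes T: "T \<subseteq> carrier R"
  shows "ideal {w \<in> carrier R. \<forall>a\<in>carrier R. \<forall>t\<in>T. w \<otimes> a \<otimes> t = \<zero>} R"
proof (rule ideal_closure)
  show "{w \<in> carrier R. \<forall>a\<in>carrier R. \<forall>t\<in>T. w \<otimes> a \<otimes> t = \<zero>} \<subseteq> carrier R" by blast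
  show "\<zero> \<in> {w \<in> carrier R. \<forall>a\<in>carrier R. \<forall>t\<in>T. w \<otimes> a \<otimes> t = \<zero>}" using T by auto
next
  fix x y assume x: "x \<in> {w \<in> carrier R. \<forall>a\<in>carrier R. \<forall>t\<in>T. w \<otimes> a \<otimes> t = \<zero>}"
    and y: "y \<in> {w \<in> carrier R. \<forall>a\<in>carrier R. \<forall>t\<in>T. w \<otimes> a \<otimes> t = \<zero>}"
  show "x \<oplus> y \<in> {w \<in> carrier R. \<forall>a\<in>carrier R. \<forall>t\<in>T. w \<otimes> a \<otimes> t = \<zero>}"
  proof (intro CollectI conjI ballI)
    show "x \<oplus> y \<in> carrier R" using x y by simp
    fix a t assume at: "a \<in> carrier R" "t \<in> T"
    then have "(x \<oplus> y) \<otimes> a \<otimes> t = x \<otimes> a \<otimes> t \<oplus> y \<otimes> a \<otimes> t" using x y T by (auto simp: l_distr)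
    then show "(x \<oplus> y) \<otimes> a \<otimes> t = \<zero>" using x y at by simp
  qed
next
  fix x c assume x: "x \<in> {w \<in> carrier R. \<forall>a\<in>carrier R. \<forall>t\<in>T. w \<otimes> a \<otimes> t = \<zero>}" and c: "c \<in> carrier R"
  show "c \<otimes> x \<in> {w \<in> carrier R. \<forall>a\<in>carrier R. \<forall>t\<in>T. w \<otimes> a \<otimes> t = \<zero>}"
  proof (intro CollectI conjI ballI)
    show "c \<otimes> x \<in> carrier R" using x c by simp
    have xc: "x \<in> carrier R" using x by blast
    fix a t assume at: "a \<in> carrier R" "t \<in> T"
    then have tc: "t \<in> carrier R" using T by blast
    have "c \<otimes> x \<otimes> a \<otimes> t = c \<otimes> (x \<otimes> a) \<otimes> t" using m_assoc[of c x a] at xc c by simp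
    also have "\<dots> = c \<otimes> (x \<otimes> a \<otimes> t)" using m_assoc[of c "x \<otimes> a" t] tc at xc c by simp
    finally have "c \<otimes> x \<otimes> a \<otimes> t = c \<otimes> (x \<otimes> a \<otimes> t)" .
    then show "c \<otimes> x \<otimes> a \<otimes> t = \<zero>" using x c at by simp
  qed
  show "x \<otimes> c \<in> {w \<in> carrier R. \<forall>a\<in>carrier R. \<forall>t\<in>T. w \<otimes> a \<otimes> t = \<zero>}"
  proof (intro CollectI conjI ballI)
    show "x \<otimes> c \<in> carrier R" using x c by simp
    have xc: "x \<in> carrier R" using x by blast
    fix a t assume at: "a \<in> carrier R" "t \<in> T"
    then have "x \<otimes> c \<otimes> a \<otimes> t = x \<otimes> (c \<otimes> a) \<otimes> t" using m_assoc[of x c a] at xc c by simp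
    then show "x \<otimes> c \<otimes> a \<otimes> t = \<zero>" using x c at by simp
  qed
qed

lemma (in ring) genideal_cross:
  assumes B: "B \<subseteq> carrier R" and B': "B' \<subseteq> carrier R"
    and z: "\<And>b' a b. b' \<in> B' \<Longrightarrow> a \<in> carrier R \<Longrightarrow> b \<in> B \<Longrightarrow> b' \<otimes> a \<otimes> b = \<zero>"
    and p: "p \<in> Idl B'" and q: "q \<in> Idl B"
  shows "p \<otimes> q = \<zero>"
proof -
  let ?L = "{z \<in> carrier R. \<forall>t\<in>B'. \<forall>a\<in>carrier R. t \<otimes> a \<otimes> z = \<zero>}"
  have "B \<subseteq> ?L"
  proof
    fix b assume b: "b \<in> B"
    then have "b \<in> carrier R" using B by blast
    moreover have "\<forall>t\<in>B'. \<forall>a\<in>carrier R. t \<otimes> a \<otimes> b = \<zero>" using z b by blast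
    ultimately show "b \<in> ?L" by blast
  qed
  then have "Idl B \<subseteq> ?L" by (rule genideal_minimal[OF ann_left_ideal[OF B']])
  then have IB: "\<And>t a q. t \<in> B' \<Longrightarrow> a \<in> carrier R \<Longrightarrow> q \<in> Idl B \<Longrightarrow> t \<otimes> a \<otimes> q = \<zero>" by blast
  have IBc: "Idl B \<subseteq> carrier R" using ideal.Icarr[OF genideal_ideal[OF B]] by blast
  let ?R = "{w \<in> carrier R. \<forall>a\<in>carrier R. \<forall>t\<in>Idl B. w \<otimes> a \<otimes> t = \<zero>}"
  have "B' \<subseteq> ?R"
  proof
    fix b assume b: "b \<in> B'"
    then have "b \<in> carrier R" using B' by blast
    moreover have "\<forall>a\<in>carrier R. \<forall>t\<in>Idl B. b \<otimes> a \<otimes> t = \<zero>" using IB b by blast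
    ultimately show "b \<in> ?R" by blast
  qed
  then have "Idl B' \<subseteq> ?R" by (rule genideal_minimal[OF ann_right_ideal[OF IBc]])
  then have "\<forall>a\<in>carrier R. \<forall>t\<in>Idl B. p \<otimes> a \<otimes> t = \<zero>" using p by blast
  then have "p \<otimes> \<one> \<otimes> q = \<zero>" using q by simp
  moreover have "p \<in> carrier R" using ideal.Icarr[OF genideal_ideal[OF B'] p] .
  ultimately show ?thesis by simp
qed

lemma (in ring) prod_zero_ideal:
  assumes I: "ideal I R" and z: "\<And>p q. p \<in> I \<Longrightarrow> q \<in> I \<Longrightarrow> p \<otimes> q = \<zero>"
  shows "ideal_prod R I I = {\<zero>}"
proof
  show "ideal_prod R I I \<subseteq> {\<zero>}"
  proof
    fix s assume "s \<in> ideal_prod R I I"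
    then show "s \<in> {\<zero>}"
      by (induct s rule: ideal_prod.induct) (use z in auto)
  qed
  have "\<zero> \<in> I" using additive_subgroup.zero_closed[OF ideal.axioms(1)[OF I]] .
  then have "\<zero> \<otimes> \<zero> \<in> ideal_prod R I I" using ideal_prod.prod[of "\<zero>" I "\<zero>" I R] by blast
  then show "{\<zero>} \<subseteq> ideal_prod R I I" by simp
qed

lemma semiprime_inter:
  assumes sp: "semiprime A" and P: "ideal P A" and Q: "ideal Q A"
    and z: "\<And>p q. p \<in> P \<Longrightarrow> q \<in> Q \<Longrightarrow> p \<otimes>\<^bsub>A\<^esub> q = \<zero>\<^bsub>A\<^esub>"
  shows "P \<inter> Q = {\<zero>\<^bsub>A\<^esub>}"
proof -
  have r: "ring A" using sp unfolding semiprime_def by blast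
  interpret ring A by (rule r)
  have I: "ideal (P \<inter> Q) A" using i_intersect[OF P Q] .
  have "ideal_prod A (P \<inter> Q) (P \<inter> Q) = {\<zero>\<^bsub>A\<^esub>}" using prod_zero_ideal[OF I] z by blast
  then have "ideal_pow A (P \<inter> Q) 1 = {\<zero>\<^bsub>A\<^esub>}" unfolding ideal_pow_def by simp
  then show ?thesis using sp I unfolding semiprime_def by blast
qed

lemma semiprime_elem:
  assumes sp: "semiprime A" and zc: "z \<in> carrier A"
    and zz: "\<And>a. a \<in> carrier A \<Longrightarrow> z \<otimes>\<^bsub>A\<^esub> a \<otimes>\<^bsub>A\<^esub> z = \<zero>\<^bsub>A\<^esub>"
  shows "z = \<zero>\<^bsub>A\<^esub>"
proof -
  have r: "ring A" using sp unfolding semiprime_def by blast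
  interpret ring A by (rule r)
  have zs: "{z} \<subseteq> carrier A" using zc by simp
  have I: "ideal (Idl\<^bsub>A\<^esub> {z}) A" using genideal_ideal[OF zs] .
  have "\<And>p q. p \<in> Idl\<^bsub>A\<^esub> {z} \<Longrightarrow> q \<in> Idl\<^bsub>A\<^esub> {z} \<Longrightarrow> p \<otimes>\<^bsub>A\<^esub> q = \<zero>\<^bsub>A\<^esub>"
    using genideal_cross[OF zs zs] zz by blast
  then have "Idl\<^bsub>A\<^esub> {z} \<inter> Idl\<^bsub>A\<^esub> {z} = {\<zero>\<^bsub>A\<^esub>}" using semiprime_inter[OF sp I I] by blast
  then show ?thesis using genideal_self'[OF zc] by blast
qed


lemma (in ring) diff0_eq: "a \<in> carrier R \<Longrightarrow> b \<in> carrier R \<Longrightarrow> a \<oplus> \<ominus> b = \<zero> \<Longrightarrow> a = b"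
proof -
  assume a: "a \<in> carrier R" and b: "b \<in> carrier R" and e: "a \<oplus> \<ominus> b = \<zero>"
  have "a = a \<oplus> (\<ominus> b \<oplus> b)" using a b by (simp add: l_neg)
  also have "\<dots> = (a \<oplus> \<ominus> b) \<oplus> b" using a b by (simp add: a_assoc)
  also have "\<dots> = b" using e b by simp
  finally show ?thesis .
qed

lemma right_idealD:
  assumes "right_ideal A B"
  shows "B \<subseteq> carrier A" "\<zero>\<^bsub>A\<^esub> \<in> B" "\<And>x y. x \<in> B \<Longrightarrow> y \<in> B \<Longrightarrow> x \<oplus>\<^bsub>A\<^esub> y \<in> B"
    "\<And>x a. x \<in> B \<Longrightarrow> a \<in> carrier A \<Longrightarrow> x \<otimes>\<^bsub>A\<^esub> a \<in> B"
  using assms unfolding right_ideal_def submodule_def regular_rmodule_def by auto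

lemma right_idealI:
  assumes "B \<subseteq> carrier A" "\<zero>\<^bsub>A\<^esub> \<in> B" "\<And>x y. x \<in> B \<Longrightarrow> y \<in> B \<Longrightarrow> x \<oplus>\<^bsub>A\<^esub> y \<in> B"
    "\<And>x a. x \<in> B \<Longrightarrow> a \<in> carrier A \<Longrightarrow> x \<otimes>\<^bsub>A\<^esub> a \<in> B"
  shows "right_ideal A B"
  using assms unfolding right_ideal_def submodule_def regular_rmodule_def by auto

lemma (in rmod) img_ideal_sub:
  assumes x: "x \<in> mcarrier M" and B: "right_ideal A B"
  shows "submodule A M {mact M x c | c. c \<in> B}"
proof -
  interpret ring A by (rule ringA)
  note Bd = right_idealD[OF B]
  show ?thesis unfolding submodule_def
  proof (intro conjI ballI)
    show "{mact M x c |c. c \<in> B} \<subseteq> mcarrier M" using x Bd(1) by auto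
    have "mact M x \<zero>\<^bsub>A\<^esub> = mzero M" using x by simp
    then show "mzero M \<in> {mact M x c |c. c \<in> B}" using Bd(2) by (metis (mono_tags, lifting) mem_Collect_eq)
  next
    fix u v assume "u \<in> {mact M x c |c. c \<in> B}" "v \<in> {mact M x c |c. c \<in> B}"
    then obtain c d where cd: "c \<in> B" "d \<in> B" "u = mact M x c" "v = mact M x d" by blast
    then have "c \<in> carrier A" "d \<in> carrier A" using Bd(1) by auto
    then have "madd M u v = mact M x (c \<oplus>\<^bsub>A\<^esub> d)" using act_distr2[of x c d] x cd by simp
    moreover have "c \<oplus>\<^bsub>A\<^esub> d \<in> B" using Bd(3) cd by blast
    ultimately show "madd M u v \<in> {mact M x c |c. c \<in> B}" by blast
  next
    fix u e assume "u \<in> {mact M x c |c. c \<in> B}" and e: "e \<in> carrier A"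
    then obtain c where c: "c \<in> B" "u = mact M x c" by blast
    then have "c \<in> carrier A" using Bd(1) by auto
    then have "mact M u e = mact M x (c \<otimes>\<^bsub>A\<^esub> e)" using act_mult[of x c e] x e c by simp
    moreover have "c \<otimes>\<^bsub>A\<^esub> e \<in> B" using Bd(4) c e by blast
    ultimately show "mact M u e \<in> {mact M x c |c. c \<in> B}" by blast
  qed
qed

lemma cross_zero:
  fixes A :: "('r, 'b) ring_scheme" (structure) and Y :: "('m, 'r) rmodule"
  assumes Y: "rmodule A Y"
    and hom: "\<And>D1 D2 f. submodule A Y D1 \<Longrightarrow> submodule A Y D2 \<Longrightarrow> D1 \<inter> D2 = {mzero Y}
           \<Longrightarrow> rhom A Y D1 Y D2 f \<Longrightarrow> \<forall>x\<in>D1. f x = mzero Y"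
    and x: "x \<in> mcarrier Y" and x': "x' \<in> mcarrier Y"
    and disj: "rmod.cyc A Y x \<inter> rmod.cyc A Y x' \<subseteq> {mzero Y}"
    and B: "right_ideal A B" and Bx: "\<And>c. c \<in> B \<Longrightarrow> mact Y x c = mzero Y \<Longrightarrow> c = \<zero>\<^bsub>A\<^esub>"
    and B': "right_ideal A B'" and B'x: "\<And>c. c \<in> B' \<Longrightarrow> mact Y x' c = mzero Y \<Longrightarrow> c = \<zero>\<^bsub>A\<^esub>"
    and b': "b' \<in> B'" and a: "a \<in> carrier A" and b: "b \<in> B"
  shows "b' \<otimes>\<^bsub>A\<^esub> a \<otimes>\<^bsub>A\<^esub> b = \<zero>\<^bsub>A\<^esub>"
proof -
  interpret Ym: rmod A Y by (rule rmod.intro, fact)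
  interpret ring A by (rule Ym.ringA)
  note Bd = right_idealD[OF B] and B'd = right_idealD[OF B']
  have inj1: "c1 = c2" if c: "c1 \<in> B" "c2 \<in> B" "mact Y x c1 = mact Y x c2" for c1 c2
  proof -
    have cc: "c1 \<in> carrier A" "c2 \<in> carrier A" using c Bd(1) by auto
    have "\<ominus> c2 = c2 \<otimes> (\<ominus> \<one>)" using cc r_minus[of c2 "\<one>"] by simp
    then have "\<ominus> c2 \<in> B" using Bd(4)[OF c(2)] by simp
    then have dB: "c1 \<oplus> \<ominus> c2 \<in> B" using Bd(3) c(1) by blast
    have "mact Y x (c1 \<oplus> \<ominus> c2) = madd Y (mact Y x c1) (Ym.neg (mact Y x c2))"
      using x cc Ym.act_distr2 Ym.act_minus by simp
    also have "\<dots> = mzero Y" using c(3) x cc by simp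
    finally have "c1 \<oplus> \<ominus> c2 = \<zero>" using Bx dB by blast
    then show ?thesis using diff0_eq cc by blast
  qed
  define f where "f = (\<lambda>y. mact Y x' (b' \<otimes> a \<otimes> (THE c. c \<in> B \<and> mact Y x c = y)))"
  have fx: "f (mact Y x c) = mact Y x' (b' \<otimes> a \<otimes> c)" if c: "c \<in> B" for c
  proof -
    have "(THE d. d \<in> B \<and> mact Y x d = mact Y x c) = c"
      by (rule the_equality) (use c inj1 in auto)
    then show ?thesis unfolding f_def by simp
  qed
  let ?D1 = "{mact Y x c | c. c \<in> B}"
  let ?D2 = "{mact Y x' c | c. c \<in> B'}"
  have D1: "submodule A Y ?D1" using Ym.img_ideal_sub[OF x B] .
  have D2: "submodule A Y ?D2" using Ym.img_ideal_sub[OF x' B'] .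
  have "?D1 \<subseteq> Ym.cyc x" unfolding Ym.cyc_def using Bd(1) by blast
  moreover have "?D2 \<subseteq> Ym.cyc x'" unfolding Ym.cyc_def using B'd(1) by blast
  ultimately have "?D1 \<inter> ?D2 \<subseteq> {mzero Y}" using disj by blast
  moreover have "mzero Y \<in> ?D1 \<inter> ?D2" using Ym.sub_zero[OF D1] Ym.sub_zero[OF D2] by blast
  ultimately have D12: "?D1 \<inter> ?D2 = {mzero Y}" by blast
  have b'c: "b' \<in> carrier A" using b' B'd(1) by blast
  have inB': "b' \<otimes> a \<otimes> c \<in> B'" if "c \<in> B" for c
  proof -
    have "b' \<otimes> a \<in> B'" using B'd(4)[OF b' a] .
    moreover have "c \<in> carrier A" using that Bd(1) by blast
    ultimately show ?thesis using B'd(4) by blast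
  qed
  have fhom: "rhom A Y ?D1 Y ?D2 f"
    unfolding rhom_def
  proof (intro conjI ballI)
    show "f \<in> ?D1 \<rightarrow> ?D2"
    proof
      fix y assume "y \<in> ?D1"
      then obtain c where c: "c \<in> B" "y = mact Y x c" by blast
      then show "f y \<in> ?D2" using fx inB' by blast
    qed
  next
    fix u v assume "u \<in> ?D1" "v \<in> ?D1"
    then obtain c d where cd: "c \<in> B" "d \<in> B" "u = mact Y x c" "v = mact Y x d" by blast
    have cc: "c \<in> carrier A" "d \<in> carrier A" using cd Bd(1) by auto
    have "madd Y u v = mact Y x (c \<oplus> d)" using cd cc x Ym.act_distr2 by simp
    moreover have "c \<oplus> d \<in> B" using Bd(3) cd by blast
    ultimately have "f (madd Y u v) = mact Y x' (b' \<otimes> a \<otimes> (c \<oplus> d))" using fx by simp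
    also have "\<dots> = mact Y x' (b' \<otimes> a \<otimes> c \<oplus> b' \<otimes> a \<otimes> d)" using r_distr b'c a cc by simp
    also have "\<dots> = madd Y (mact Y x' (b' \<otimes> a \<otimes> c)) (mact Y x' (b' \<otimes> a \<otimes> d))"
      using Ym.act_distr2 x' b'c a cc by simp
    finally show "f (madd Y u v) = madd Y (f u) (f v)" using fx cd by simp
  next
    fix u e assume "u \<in> ?D1" and e: "e \<in> carrier A"
    then obtain c where c: "c \<in> B" "u = mact Y x c" by blast
    have cc: "c \<in> carrier A" using c Bd(1) by auto
    have "mact Y u e = mact Y x (c \<otimes> e)" using c cc e x Ym.act_mult by simp
    moreover have "c \<otimes> e \<in> B" using Bd(4) c e by blast
    ultimately have "f (mact Y u e) = mact Y x' (b' \<otimes> a \<otimes> (c \<otimes> e))" using fx by simp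
    also have "b' \<otimes> a \<otimes> (c \<otimes> e) = b' \<otimes> a \<otimes> c \<otimes> e" using m_assoc[of "b' \<otimes> a" c e] b'c a cc e by simp
    also have "mact Y x' (b' \<otimes> a \<otimes> c \<otimes> e) = mact Y (mact Y x' (b' \<otimes> a \<otimes> c)) e"
      using Ym.act_mult x' b'c a cc e by simp
    finally show "f (mact Y u e) = mact Y (f u) e" using fx c by simp
  qed
  have "\<forall>y\<in>?D1. f y = mzero Y" using hom[OF D1 D2 D12 fhom] .
  moreover have "mact Y x b \<in> ?D1" using b by blast
  ultimately have "f (mact Y x b) = mzero Y" by blast
  then have "mact Y x' (b' \<otimes> a \<otimes> b) = mzero Y" using fx[OF b] by simp
  then show ?thesis using B'x inB'[OF b] by blast
qed


lemma nonsing_B: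
  fixes A :: "('r, 'b) ring_scheme" (structure) and Y :: "('m, 'r) rmodule"
  assumes Y: "rmodule A Y" and ns: "nonsingular A Y" and x: "x \<in> mcarrier Y" "x \<noteq> mzero Y"
  shows "\<exists>B. right_ideal A B \<and> B \<noteq> {\<zero>} \<and> (\<forall>c. c \<in> B \<longrightarrow> mact Y x c = mzero Y \<longrightarrow> c = \<zero>)"
proof -
  interpret Ym: rmod A Y by (rule rmod.intro, fact)
  interpret ring A by (rule Ym.ringA)
  let ?ann = "{a \<in> carrier A. mact Y x a = mzero Y}"
  have ne: "\<not> essential_in A (regular_rmodule A) ?ann (carrier A)"
    using ns x unfolding nonsingular_def by blast
  have s1: "submodule A (regular_rmodule A) ?ann"
    unfolding right_ideal_def[symmetric]
  proof (rule right_idealI)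
    show "?ann \<subseteq> carrier A" by blast
    show "\<zero> \<in> ?ann" using x by simp
  next
    fix a b assume "a \<in> ?ann" "b \<in> ?ann"
    then show "a \<oplus> b \<in> ?ann" using x Ym.act_distr2 by simp
  next
    fix a c assume "a \<in> ?ann" "c \<in> carrier A"
    then show "a \<otimes> c \<in> ?ann" using x Ym.act_mult by simp
  qed
  have s2: "submodule A (regular_rmodule A) (carrier A)"
    unfolding right_ideal_def[symmetric] by (rule right_idealI) auto
  have z: "mzero (regular_rmodule A) = \<zero>" unfolding regular_rmodule_def by simp
  have "\<not> (\<forall>W. submodule A (regular_rmodule A) W \<and> W \<subseteq> carrier A \<and> W \<noteq> {\<zero>} \<longrightarrow> W \<inter> ?ann \<noteq> {\<zero>})"
    using ne s1 s2 z unfolding essential_in_def by auto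
  then obtain W where W: "submodule A (regular_rmodule A) W" "W \<noteq> {\<zero>}" "W \<inter> ?ann = {\<zero>}" by blast
  have "right_ideal A W" using W(1) unfolding right_ideal_def .
  moreover have "\<forall>c. c \<in> W \<longrightarrow> mact Y x c = mzero Y \<longrightarrow> c = \<zero>"
  proof (intro allI impI)
    fix c assume "c \<in> W" "mact Y x c = mzero Y"
    moreover then have "c \<in> carrier A" using right_idealD(1)[OF \<open>right_ideal A W\<close>] by blast
    ultimately have "c \<in> W \<inter> ?ann" by blast
    then show "c = \<zero>" using W(3) by blast
  qed
  ultimately show ?thesis using W(2) by blast
qed

lemma uniform_exists:
  fixes A :: "('r, 'b) ring_scheme" (structure) and Y :: "('m, 'r) rmodule"
  assumes sp: "semiprime A" and nid: "no_infinite_direct_sum_of_ideals A"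
    and Y: "rmodule A Y" and ns: "nonsingular A Y"
    and hom: "\<And>D1 D2 f. submodule A Y D1 \<Longrightarrow> submodule A Y D2 \<Longrightarrow> D1 \<inter> D2 = {mzero Y}
           \<Longrightarrow> rhom A Y D1 Y D2 f \<Longrightarrow> \<forall>x\<in>D1. f x = mzero Y"
    and Y0: "mcarrier Y \<noteq> {mzero Y}"
  shows "\<exists>U. submodule A Y U \<and> uniform A Y U"
proof (rule ccontr)
  assume nu: "\<not> (\<exists>U. submodule A Y U \<and> uniform A Y U)"
  interpret Ym: rmod A Y by (rule rmod.intro, fact)
  interpret ring A by (rule Ym.ringA)
  let ?P = "\<lambda>W p. submodule A Y (fst p) \<and> submodule A Y (snd p) \<and> fst p \<subseteq> W \<and> snd p \<subseteq> W \<and>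
      fst p \<noteq> {mzero Y} \<and> snd p \<noteq> {mzero Y} \<and> fst p \<inter> snd p = {mzero Y}"
  have split: "\<forall>W. \<exists>p. submodule A Y W \<and> W \<noteq> {mzero Y} \<longrightarrow> ?P W p"
  proof
    fix W
    show "\<exists>p. submodule A Y W \<and> W \<noteq> {mzero Y} \<longrightarrow> ?P W p"
    proof (cases "submodule A Y W \<and> W \<noteq> {mzero Y}")
      case True
      then have "\<not> uniform A Y W" using nu by blast
      then have "\<exists>U V. submodule A Y U \<and> submodule A Y V \<and> U \<subseteq> W \<and> V \<subseteq> W \<and>
        U \<noteq> {mzero Y} \<and> V \<noteq> {mzero Y} \<and> U \<inter> V = {mzero Y}"
        using True unfolding uniform_def by blast
      then obtain U V where "submodule A Y U \<and> submodule A Y V \<and> U \<subseteq> W \<and> V \<subseteq> W \<and>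
        U \<noteq> {mzero Y} \<and> V \<noteq> {mzero Y} \<and> U \<inter> V = {mzero Y}" by blast
      then have "?P W (U, V)" by simp
      then show ?thesis by blast
    next
      case False then show ?thesis by blast
    qed
  qed
  obtain spl where spl: "\<And>W. submodule A Y W \<and> W \<noteq> {mzero Y} \<longrightarrow> ?P W (spl W)"
    using choice[OF split] by blast
  define Wn where "Wn n = ((\<lambda>W. snd (spl W)) ^^ n) (mcarrier Y)" for n
  define Us where "Us n = fst (spl (Wn n))" for n
  have Wn0: "Wn 0 = mcarrier Y" unfolding Wn_def by simp
  have WnS: "Wn (Suc n) = snd (spl (Wn n))" for n unfolding Wn_def by simp
  have inv: "submodule A Y (Wn n) \<and> Wn n \<noteq> {mzero Y}" for n
  proof (induction n)
    case 0 then show ?case using Wn0 Ym.sub_full Y0 by simp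
  next
    case (Suc n)
    then have "?P (Wn n) (spl (Wn n))" using spl by blast
    then show ?case using WnS by simp
  qed
  have Pn: "?P (Wn n) (spl (Wn n))" for n using spl inv by blast
  have Us_sub: "submodule A Y (Us n)" and Us_le: "Us n \<subseteq> Wn n" and Us_nz: "Us n \<noteq> {mzero Y}"
    and W_dec: "Wn (Suc n) \<subseteq> Wn n" and UW: "Us n \<inter> Wn (Suc n) = {mzero Y}" for n
    using Pn[of n] unfolding Us_def WnS by auto
  have dec: "Wn m \<subseteq> Wn n" if "n \<le> m" for n m
    using lift_Suc_antimono_le[of Wn, OF W_dec that] .
  define xs where "xs n = (SOME x. x \<in> Us n \<and> x \<noteq> mzero Y)" for n
  have xs: "xs n \<in> Us n \<and> xs n \<noteq> mzero Y" for n
  proof -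
    have "\<exists>x. x \<in> Us n \<and> x \<noteq> mzero Y" using Ym.nonzero_elem[OF Us_nz Us_sub] by blast
    then show ?thesis unfolding xs_def by (rule someI_ex)
  qed
  have xsc: "xs n \<in> mcarrier Y" for n using xs[of n] Ym.sub_carrier[OF Us_sub] by blast
  have disj_lt: "Ym.cyc (xs n) \<inter> Ym.cyc (xs m) \<subseteq> {mzero Y}" if nm: "n < m" for n m
  proof -
    have "Ym.cyc (xs n) \<subseteq> Us n" using Ym.cyc_min[OF Us_sub] xs by blast
    moreover have "Ym.cyc (xs m) \<subseteq> Wn m" using Ym.cyc_min[OF conjunct1[OF inv[of m]]] xs Us_le by blast
    moreover have "Wn m \<subseteq> Wn (Suc n)" using dec nm by simp
    ultimately show ?thesis using UW[of n] by blast
  qed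
  have disj: "Ym.cyc (xs n) \<inter> Ym.cyc (xs m) \<subseteq> {mzero Y}" if nm: "n \<noteq> m" for n m
  proof (cases "n < m")
    case True then show ?thesis using disj_lt by blast
  next
    case False then have "m < n" using nm by simp
    then show ?thesis using disj_lt[of m n] by blast
  qed
  define Bs where "Bs n = (SOME B. right_ideal A B \<and> B \<noteq> {\<zero>} \<and> (\<forall>c. c \<in> B \<longrightarrow> mact Y (xs n) c = mzero Y \<longrightarrow> c = \<zero>))" for n
  have Bs: "right_ideal A (Bs n) \<and> Bs n \<noteq> {\<zero>} \<and> (\<forall>c. c \<in> Bs n \<longrightarrow> mact Y (xs n) c = mzero Y \<longrightarrow> c = \<zero>)" for n
    unfolding Bs_def by (rule someI_ex, rule nonsing_B[OF Y ns xsc]) (use xs in blast)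
  have Bsr: "right_ideal A (Bs n)" and Bsnz: "Bs n \<noteq> {\<zero>}"
    and Bsann: "\<And>c. c \<in> Bs n \<Longrightarrow> mact Y (xs n) c = mzero Y \<Longrightarrow> c = \<zero>" for n
    using Bs[of n] by blast+
  have Bsc: "Bs n \<subseteq> carrier A" for n using right_idealD(1)[OF Bsr] .
  define I where "I n = Idl (Bs n)" for n
  have Iid: "ideal (I n) A" for n unfolding I_def using genideal_ideal[OF Bsc] .
  have Ic: "I n \<subseteq> carrier A" for n using ideal.Icarr[OF Iid] by blast
  have Inz: "I n \<noteq> {\<zero>}" for n
  proof
    assume "I n = {\<zero>}"
    then have "Bs n \<subseteq> {\<zero>}" using genideal_self[OF Bsc[of n]] unfolding I_def by simp
    moreover have "\<zero> \<in> Bs n" using right_idealD(2)[OF Bsr] .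
    ultimately show False using Bsnz[of n] by blast
  qed
  have cross: "b' \<otimes> a \<otimes> b = \<zero>" if "n \<noteq> m" "b' \<in> Bs m" "a \<in> carrier A" "b \<in> Bs n" for n m b' a b
  proof (rule cross_zero[OF Y hom xsc xsc disj[OF that(1)], where B="Bs n" and B'="Bs m"])
    show "right_ideal A (Bs n)" "right_ideal A (Bs m)" using Bsr by blast+
    show "\<And>c. c \<in> Bs n \<Longrightarrow> mact Y (xs n) c = mzero Y \<Longrightarrow> c = \<zero>" using Bsann by blast
    show "\<And>c. c \<in> Bs m \<Longrightarrow> mact Y (xs m) c = mzero Y \<Longrightarrow> c = \<zero>" using Bsann by blast
  qed (use that in auto)
  have prodz: "p \<otimes> q = \<zero>" if nm: "n \<noteq> m" "p \<in> I m" "q \<in> I n" for n m p q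
  proof -
    have "p \<in> Idl (Bs m)" "q \<in> Idl (Bs n)" using nm(2,3) unfolding I_def by auto
    then show ?thesis
    proof (rule genideal_cross[OF Bsc[of n] Bsc[of m], rotated 1])
      fix b' a b assume "b' \<in> Bs m" "a \<in> carrier A" "b \<in> Bs n"
      then show "b' \<otimes> a \<otimes> b = \<zero>" using cross[OF nm(1)] by blast
    qed
  qed
  have Idisj: "I m \<inter> I n = {\<zero>}" if nm: "n \<noteq> m" for n m
    by (rule semiprime_inter[OF sp Iid[of m] Iid[of n] prodz[OF nm]])
  have injI: "inj I"
  proof (rule injI)
    fix n m assume e: "I n = I m"
    show "n = m"
    proof (rule ccontr)
      assume "n \<noteq> m"
      then have "I m \<inter> I n = {\<zero>}" by (rule Idisj)
      then show False using e Inz[of n] by simp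
    qed
  qed
  have infS: "infinite (range I)"
  proof
    assume "finite (range I)"
    then have "finite (UNIV :: nat set)" using finite_imageD[of I UNIV] injI by simp
    then show False by simp
  qed
  have indep: "independent_ideals A (range I)"
    unfolding independent_ideals_def
  proof (intro allI impI ballI)
    fix F g K
    assume h: "finite F \<and> F \<subseteq> range I \<and> (\<forall>J\<in>F. g J \<in> J) \<and> finsum A g F = \<zero>"
      and KF: "K \<in> F"
    have fin: "finite F" and FI: "F \<subseteq> range I" and gJ: "\<And>J. J \<in> F \<Longrightarrow> g J \<in> J" and g0: "finsum A g F = \<zero>"
      using h by auto
    obtain k where k: "K = I k" using KF FI by blast
    have gc: "g \<in> F \<rightarrow> carrier A"
    proof
      fix J assume "J \<in> F"
      then obtain j where "J = I j" using FI by blast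
      then show "g J \<in> carrier A" using gJ[OF \<open>J \<in> F\<close>] Ic by blast
    qed
    have zK: "g K \<in> I k" using gJ[OF KF] k by simp
    have zc: "g K \<in> carrier A" using gc KF by blast
    have "g K \<otimes> a \<otimes> g K = \<zero>" if a: "a \<in> carrier A" for a
    proof -
      have zac: "g K \<otimes> a \<in> carrier A" using zc a by simp
      have zaI: "g K \<otimes> a \<in> I k" using ideal.I_r_closed[OF Iid zK a] .
      have hc: "(\<lambda>J. g K \<otimes> a \<otimes> g J) \<in> F \<rightarrow> carrier A" using gc zac by auto
      have "\<zero> = g K \<otimes> a \<otimes> finsum A g F" using g0 zac by simp
      also have "\<dots> = finsum A (\<lambda>J. g K \<otimes> a \<otimes> g J) F" using finsum_rdistr[OF fin zac gc] .
      also have "\<dots> = finsum A (\<lambda>J. g K \<otimes> a \<otimes> g J) (insert K (F - {K}))" using KF by (simp add: insert_absorb)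
      also have "\<dots> = g K \<otimes> a \<otimes> g K \<oplus> finsum A (\<lambda>J. g K \<otimes> a \<otimes> g J) (F - {K})"
        using finsum_insert[of "F - {K}" K "\<lambda>J. g K \<otimes> a \<otimes> g J"] fin hc KF zac zc by auto
      also have "finsum A (\<lambda>J. g K \<otimes> a \<otimes> g J) (F - {K}) = finsum A (\<lambda>J. \<zero>) (F - {K})"
      proof (rule finsum_cong')
        show "F - {K} = F - {K}" ..
        show "(\<lambda>J. \<zero>) \<in> F - {K} \<rightarrow> carrier A" by simp
        fix J assume J: "J \<in> F - {K}"
        then obtain j where j: "J = I j" using FI by blast
        have "j \<noteq> k" using J j k by blast
        moreover have "g J \<in> I j" using gJ J j by blast
        ultimately show "g K \<otimes> a \<otimes> g J = \<zero>" using prodz[of j k "g K \<otimes> a" "g J"] zaI by blast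
      qed
      also have "\<dots> = \<zero>" by simp
      finally show ?thesis using zc a by simp
    qed
    then show "g K = \<zero>" using semiprime_elem[OF sp zc] by blast
  qed
  have "\<forall>J\<in>range I. ideal J A \<and> J \<noteq> {\<zero>}" using Iid Inz by blast
  then show False using nid infS indep unfolding no_infinite_direct_sum_of_ideals_def by blast
qed


theorem lemma2p4:
  fixes A :: "('r, 'b) ring_scheme" and Y :: "('m, 'r) rmodule"
  assumes "semiprime A"
    and "no_infinite_direct_sum_of_ideals A"
    and "rmodule A Y"
    and "nonsingular A Y"
    and "aut_invariant TYPE('e) A Y (mcarrier Y)"
    and "square_free A Y (mcarrier Y)"
    and "\<And>D1 D2 f. submodule A Y D1 \<Longrightarrow> submodule A Y D2 \<Longrightarrow> D1 \<inter> D2 = {mzero Y}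
           \<Longrightarrow> rhom A Y D1 Y D2 f \<Longrightarrow> \<forall>x\<in>D1. f x = mzero Y"
    and "\<And>\<K>. \<K> \<subseteq> {K. closed_in A Y K (mcarrier Y)}
           \<Longrightarrow> aut_invariant TYPE('e) A Y (submodule_sum A Y \<K>)"
  shows "mcarrier Y = {mzero Y} \<or>
         (\<exists>X. submodule A Y X \<and> X \<noteq> {mzero Y} \<and> uniform A Y X \<and> quasi_injective A Y X)"
proof (cases "mcarrier Y = {mzero Y}")
  case True
  then show ?thesis by blast
next
  case False
  have "\<exists>U. submodule A Y U \<and> uniform A Y U"
  proof (rule uniform_exists)
    show "semiprime A" by (rule assms(1))
    show "no_infinite_direct_sum_of_ideals A" by (rule assms(2))
    show "rmodule A Y" by (rule assms(3))
    show "nonsingular A Y" by (rule assms(4))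
    show "mcarrier Y \<noteq> {mzero Y}" by (rule False)
    fix D1 D2 f
    assume "submodule A Y D1" "submodule A Y D2" "D1 \<inter> D2 = {mzero Y}" "rhom A Y D1 Y D2 f"
    then show "\<forall>x\<in>D1. f x = mzero Y" by (rule assms(7))
  qed
  then obtain U where U: "submodule A Y U" "uniform A Y U" by blast
  obtain K where K: "submodule A Y K" "closed_in A Y K (mcarrier Y)" "uniform A Y K"
    using closure_exists[OF assms(3) U] by blast
  have sumK: "submodule_sum A Y {K} = K" unfolding submodule_sum_def using K(1) by blast
  have "{K} \<subseteq> {K. closed_in A Y K (mcarrier Y)}" using K(2) by blast
  then have "aut_invariant TYPE('e) A Y (submodule_sum A Y {K})" by (rule assms(8))
  then have ai: "aut_invariant TYPE('e) A Y K" using sumK by simp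
  have "quasi_injective A Y K" using uniform_ai_qi[OF assms(3) K(1) K(3) ai] .
  moreover have "K \<noteq> {mzero Y}" using K(3) unfolding uniform_def by blast
  ultimately show ?thesis using K by blast
qed

end
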